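(* Let $(\mu_\rho)_{0<\rho<1}$ be a family of translation invariant product probability measures on $\mathbb{N}^{\mathbb{Z}^d}$ satisfying: (i) $G_\rho(t)=\mathbb{E}_{\mu_\rho}(e^{t\eta(0)})<\infty$ for all $t\in\mathbb{R}$; (ii) $\mathbb{E}_{\mu_\rho}(\eta(0))=\rho$; (iii) whenever $a_\rho\ge0$ with $a_\rho\to\infty$ as $\rho\to0$, also $\sup\{x:G_\rho(x)\le a_\rho\}\to\infty$ as $\rho\to0$. Then for all $\rho$ sufficiently small there is a constant $\gamma_d=\gamma_d(d,\rho)>0$ such that for all $n$, $\mathbb{P}_{\mu_\rho}(|\mathcal{W}_\infty(0)|\ge n)\le e^{-\gamma_dn}$.
   Context: Sandpile model on $\mathbb{Z}^d$: $\eta\in\mathbb{N}^{\mathbb{Z}^d}$, site $x$ unstable if $\eta(x)\ge 2d$; toppling $x$ removes $2d$ grains from $x$ and adds one to each of its $2d$ nearest neighbors. A configuration $\eta$ is stabilizable if there is a legal toppling procedure (topplings of unstable sites only, occurring at times in $[0,\infty)$, finitely many per site in bounded time, no infinite backward chain of topplings at neighboring sites at decreasing times) in which every site topples finitely often and the final configuration $\eta_\infty$ is stable ($\eta_\infty(x)\le 2d-1$ for all $x$); the number of topplings at each site and $\eta_\infty$ do not depend on the stabilizing procedure. (Translation invariant measures with density $<d$ are known to be stabilizable.) For stabilizable $\eta$, let $\mathcal{T}_\infty$ be the set of sites that topple at least once during stabilization, $\mathcal{V}_\infty=\{x:\eta_\infty(x)>0\}$, $\mathcal{W}_\infty=\mathcal{T}_\infty\cup\mathcal{V}_\infty$,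 and $\mathcal{W}_\infty(0)$ the connected component (nearest-neighbor adjacency) of $\mathcal{W}_\infty$ containing the origin (empty if $0\notin\mathcal{W}_\infty$); $|\cdot|$ denotes cardinality. *)

theory Defs
  imports "HOL-Probability.Probability"
begin

text \<open>Sites of the lattice Z^d are integer vectors indexed by a finite type 'd,
  so d = CARD('d). Configurations are maps from sites to nat.\<close>

type_synonym 'd site = "int ^ 'd"
type_synonym 'd config = "'d site \<Rightarrow> nat"

definition adj :: "'d::finite site \<Rightarrow> 'd site \<Rightarrow> bool" where
  "adj x y \<longleftrightarrow> (\<Sum>i\<in>UNIV. \<bar>x $ i - y $ i\<bar>) = 1"

definition nbrs :: "'d::finite site \<Rightarrow> 'd site set" where
  "nbrs x = {y. adj x y}"

text \<open>A toppling procedure: T x is the set of times at which site x topples.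
  The configuration just before time s (topplings at times strictly before s counted).\<close>

definition before :: "'d::finite config \<Rightarrow> ('d site \<Rightarrow> real set) \<Rightarrow> real \<Rightarrow> 'd site \<Rightarrow> int" where
  "before \<eta> T s x = int (\<eta> x) - 2 * int CARD('d) * int (card {t \<in> T x. t < s})
      + (\<Sum>y\<in>nbrs x. int (card {t \<in> T y. t < s}))"

definition legal_procedure :: "'d::finite config \<Rightarrow> ('d site \<Rightarrow> real set) \<Rightarrow> bool" where
  "legal_procedure \<eta> T \<longleftrightarrow>
     (\<forall>x. T x \<subseteq> {0..}) \<and>
     (\<forall>x t. finite (T x \<inter> {0..t})) \<and>
     (\<forall>x s. s \<in> T x \<longrightarrow> before \<eta> T s x \<ge> 2 * int CARD('d)) \<and>
     \<not> (\<exists>xs ts :: nat \<Rightarrow> _. \<forall>k. ts k \<in> T (xs k) \<and> adj (xs k) (xs (Suc k)) \<and> ts (Suc k) < ts k)"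

definition final_config :: "'d::finite config \<Rightarrow> ('d site \<Rightarrow> real set) \<Rightarrow> 'd site \<Rightarrow> int" where
  "final_config \<eta> T x = int (\<eta> x) - 2 * int CARD('d) * int (card (T x))
      + (\<Sum>y\<in>nbrs x. int (card (T y)))"

definition stabilizing :: "'d::finite config \<Rightarrow> ('d site \<Rightarrow> real set) \<Rightarrow> bool" where
  "stabilizing \<eta> T \<longleftrightarrow> legal_procedure \<eta> T \<and> (\<forall>x. finite (T x)) \<and>
      (\<forall>x. final_config \<eta> T x \<le> 2 * int CARD('d) - 1)"

definition stabilizable :: "'d::finite config \<Rightarrow> bool" where
  "stabilizable \<eta> \<longleftrightarrow> (\<exists>T. stabilizing \<eta> T)"

text \<open>Odometer and final configuration do not depend on the stabilizing procedure
  (known fact), so we may pick any one.\<close>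

definition stab_proc :: "'d::finite config \<Rightarrow> 'd site \<Rightarrow> real set" where
  "stab_proc \<eta> = (SOME T. stabilizing \<eta> T)"

definition T_inf :: "'d::finite config \<Rightarrow> 'd site set" where
  "T_inf \<eta> = {x. stab_proc \<eta> x \<noteq> {}}"

definition V_inf :: "'d::finite config \<Rightarrow> 'd site set" where
  "V_inf \<eta> = {x. final_config \<eta> (stab_proc \<eta>) x > 0}"

definition W_inf :: "'d::finite config \<Rightarrow> 'd site set" where
  "W_inf \<eta> = T_inf \<eta> \<union> V_inf \<eta>"

definition component :: "'d::finite site set \<Rightarrow> 'd site \<Rightarrow> 'd site set" where
  "component W z = (if z \<in> W then {y. (z, y) \<in> {(a, b). a \<in> W \<and> b \<in> W \<and> adj a b}\<^sup>*} else {})"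

definition W_inf0 :: "'d::finite config \<Rightarrow> 'd site set" where
  "W_inf0 \<eta> = component (W_inf \<eta>) 0"

definition prod_measure :: "nat pmf \<Rightarrow> ('d::finite config) measure" where
  "prod_measure p = PiM UNIV (\<lambda>_. measure_pmf p)"

definition mgf :: "nat pmf \<Rightarrow> real \<Rightarrow> real" where
  "mgf p t = measure_pmf.expectation p (\<lambda>k. exp (t * real k))"

end

theory Submission
  imports Defs
begin


definition ev :: "'d::finite \<Rightarrow> 'd site" where
  "ev i = (\<chi> j. if j = i then 1 else 0)"

lemma adj_sym: "adj x y = adj y x"
  unfolding adj_def by (simp add: abs_minus_commute)

lemma adj_plus: "adj x (x + ev i)"
proof -
  have "(\<Sum>j\<in>UNIV. \<bar>x $ j - (x + ev i) $ j\<bar>) = (\<Sum>j\<in>UNIV. if j = i then 1 else 0)"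
    by (rule sum.cong) (auto simp: ev_def)
  also have "\<dots> = 1" by simp
  finally show ?thesis unfolding adj_def .
qed

lemma adj_minus: "adj x (x - ev i)"
proof -
  have "(\<Sum>j\<in>UNIV. \<bar>x $ j - (x - ev i) $ j\<bar>) = (\<Sum>j\<in>UNIV. if j = i then 1 else 0)"
    by (rule sum.cong) (auto simp: ev_def)
  also have "\<dots> = 1" by simp
  finally show ?thesis unfolding adj_def .
qed

lemma adj_cases:
  assumes "adj x y"
  shows "\<exists>i. y = x + ev i \<or> y = x - ev i"
proof -
  define f where "f j = \<bar>x $ j - y $ j\<bar>" for j
  have S: "(\<Sum>j\<in>UNIV. f j) = 1" using assms by (simp add: adj_def f_def)
  have nn: "\<And>j. f j \<ge> 0" by (simp add: f_def)
  obtain i where i: "f i \<noteq> 0"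
  proof (rule ccontr)
    assume "\<not> thesis"
    then have "\<forall>j. f j = 0" using that by blast
    with S show False by simp
  qed
  have split: "(\<Sum>j\<in>UNIV. f j) = f i + (\<Sum>j\<in>UNIV - {i}. f j)"
    by (simp add: sum.remove)
  have r: "(\<Sum>j\<in>UNIV - {i}. f j) \<ge> 0" by (simp add: nn sum_nonneg)
  have "f i \<ge> 1" using i nn[of i] by linarith
  with S split r have fi: "f i = 1" and r0: "(\<Sum>j\<in>UNIV - {i}. f j) = 0" by linarith+
  from r0 have oth: "\<forall>j\<in>UNIV - {i}. f j = 0"
    by (subst (asm) sum_nonneg_eq_0_iff) (auto simp: nn)
  from fi have "y $ i = x $ i + 1 \<or> y $ i = x $ i - 1" by (auto simp: f_def abs_if split: if_splits)
  then show ?thesis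
  proof
    assume h: "y $ i = x $ i + 1"
    have "y = x + ev i"
      using oth h by (auto simp: vec_eq_iff ev_def f_def)
    then show ?thesis by blast
  next
    assume h: "y $ i = x $ i - 1"
    have "y = x - ev i"
      using oth h by (auto simp: vec_eq_iff ev_def f_def)
    then show ?thesis by blast
  qed
qed

lemma nbrs_sub: "nbrs x \<subseteq> (\<lambda>i. x + ev i) ` UNIV \<union> (\<lambda>i. x - ev i) ` UNIV"
  using adj_cases unfolding nbrs_def by blast

lemma finite_nbrs[simp]: "finite (nbrs (x::'d::finite site))"
  by (rule finite_subset[OF nbrs_sub]) auto

lemma card_nbrs: "card (nbrs (x::'d::finite site)) \<le> 2 * CARD('d)"
proof -
  have "card (nbrs x) \<le> card ((\<lambda>i. x + ev i) ` UNIV \<union> (\<lambda>i. x - ev i) ` (UNIV::'d set))"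
    by (rule card_mono[OF _ nbrs_sub]) auto
  also have "\<dots> \<le> card ((\<lambda>i. x + ev i) ` (UNIV::'d set)) + card ((\<lambda>i. x - ev i) ` (UNIV::'d set))"
    by (rule card_Un_le)
  also have "\<dots> \<le> CARD('d) + CARD('d)"
    by (intro add_mono card_image_le) auto
  finally show ?thesis by simp
qed

lemma in_nbrs: "y \<in> nbrs x \<longleftrightarrow> adj x y" by (simp add: nbrs_def)

lemma adj_irrefl: "\<not> adj x x" by (simp add: adj_def)



abbreviation DD :: "'d::finite itself \<Rightarrow> int" where "DD _ \<equiv> 2 * int CARD('d)"

locale fproc =
  fixes \<eta> :: "'d::finite config" and P :: "'d site \<Rightarrow> real set"
  assumes fin: "\<And>x. finite (P x)"
    and leg: "\<And>x s. s \<in> P x \<Longrightarrow> before \<eta> P s x \<ge> 2 * int CARD('d)"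
begin

lemma final_ge:
  assumes ne: "P x \<noteq> {}"
  shows "final_config \<eta> P x \<ge> (\<Sum>w\<in>nbrs x. int (card {t \<in> P w. t \<ge> Max (P x)}))"
proof -
  define L where "L = Max (P x)"
  have L: "L \<in> P x" "\<And>t. t \<in> P x \<Longrightarrow> t \<le> L" using fin[of x] ne by (auto simp: L_def)
  have e: "P x = insert L {t \<in> P x. t < L}" using L by force
  have cx: "card (P x) = card {t \<in> P x. t < L} + 1"
    by (subst e, subst card_insert_disjoint) (use fin[of x] in auto)
  have cw: "card (P w) = card {t \<in> P w. t < L} + card {t \<in> P w. t \<ge> L}" for w
  proof -
    have "P w = {t \<in> P w. t < L} \<union> {t \<in> P w. t \<ge> L}" by auto
    moreover have "{t \<in> P w. t < L} \<inter> {t \<in> P w. t \<ge> L} = {}" by auto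
    ultimately show ?thesis using fin[of w] card_Un_disjoint[of "{t \<in> P w. t < L}" "{t \<in> P w. t \<ge> L}"]
      by simp
  qed
  have "(\<Sum>w\<in>nbrs x. int (card (P w))) = (\<Sum>w\<in>nbrs x. int (card {t \<in> P w. t < L})) + (\<Sum>w\<in>nbrs x. int (card {t \<in> P w. t \<ge> L}))"
    by (subst sum.distrib[symmetric]) (rule sum.cong, simp_all only: cw of_nat_add)
  then have "final_config \<eta> P x = before \<eta> P L x - 2 * int CARD('d)
       + (\<Sum>w\<in>nbrs x. int (card {t \<in> P w. t \<ge> L}))"
    unfolding final_config_def before_def cx by (simp add: algebra_simps)
  with leg[OF L(1)] show ?thesis by (simp add: L_def)
qed

lemma final_empty: "P x = {} \<Longrightarrow> final_config \<eta> P x = int (\<eta> x) + (\<Sum>w\<in>nbrs x. int (card (P w)))"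
  by (simp add: final_config_def)

lemma final_nonneg: "final_config \<eta> P x \<ge> 0"
proof (cases "P x = {}")
  case True then show ?thesis by (simp add: final_empty sum_nonneg)
next
  case False
  have "0 \<le> (\<Sum>w\<in>nbrs x. int (card {t \<in> P w. t \<ge> Max (P x)}))" by (simp add: sum_nonneg)
  with final_ge[OF False] show ?thesis by linarith
qed

lemma sum_ge_term:
  fixes f :: "_ \<Rightarrow> int"
  assumes "finite A" "a \<in> A" "\<And>x. x \<in> A \<Longrightarrow> f x \<ge> 0"
  shows "(\<Sum>x\<in>A. f x) \<ge> f a"
  by (rule member_le_sum) (use assms in auto)

lemma final_empty_nbr:
  assumes "P x = {}" "adj x w" shows "final_config \<eta> P x \<ge> int (card (P w))"
proof -
  have "(\<Sum>w\<in>nbrs x. int (card (P w))) \<ge> int (card (P w))"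
    by (rule sum_ge_term) (use assms in \<open>auto simp: in_nbrs\<close>)
  then show ?thesis by (simp add: final_empty[OF assms(1)])
qed

lemma final_late_nbr:
  assumes ne: "P x \<noteq> {}" and a: "adj x w" and t: "t \<in> P w" "t \<ge> Max (P x)"
  shows "final_config \<eta> P x \<ge> 1"
proof -
  have "int (card {t \<in> P w. t \<ge> Max (P x)}) \<ge> 1"
    using t fin[of w] by (auto simp: card_gt_0_iff Suc_le_eq)
  moreover have "(\<Sum>w\<in>nbrs x. int (card {t \<in> P w. t \<ge> Max (P x)})) \<ge> int (card {t \<in> P w. t \<ge> Max (P x)})"
    by (rule sum_ge_term) (use a in \<open>auto simp: in_nbrs\<close>)
  ultimately show ?thesis using final_ge[OF ne] by linarith
qed

lemma zero_nbr_pos: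
  assumes ne: "P x \<noteq> {}" and z: "final_config \<eta> P x \<le> 0" and a: "adj x y"
  shows "final_config \<eta> P y > 0"
proof (cases "P y = {}")
  case True
  have "int (card (P x)) \<ge> 1" using ne fin[of x] by (simp add: Suc_le_eq card_gt_0_iff)
  with final_empty_nbr[OF True, of x] a show ?thesis by (simp add: adj_sym)
next
  case False
  have My: "Max (P y) \<in> P y" using False fin[of y] by simp
  have Mx: "Max (P x) \<in> P x" using ne fin[of x] by simp
  show ?thesis
  proof (cases "Max (P y) \<ge> Max (P x)")
    case True
    with final_late_nbr[OF ne a My] z show ?thesis by simp
  next
    case False2: False
    have "final_config \<eta> P y \<ge> 1"
      by (rule final_late_nbr[OF False _ Mx]) (use a False2 in \<open>auto simp: adj_sym\<close>)
    then show ?thesis by simp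
  qed
qed

end



definition edg :: "'d::finite site set \<Rightarrow> ('d site \<times> 'd site) set" where
  "edg C = {(a,b). a \<in> C \<and> b \<in> C \<and> adj a b}"

definition conn :: "'d::finite site set \<Rightarrow> 'd site \<Rightarrow> bool" where
  "conn C z \<longleftrightarrow> z \<in> C \<and> (\<forall>y\<in>C. (z,y) \<in> (edg C)\<^sup>*)"

lemma edg_mono: "C \<subseteq> G \<Longrightarrow> (edg C)\<^sup>* \<subseteq> (edg G)\<^sup>*"
  by (rule rtrancl_mono) (auto simp: edg_def)

context fproc begin

definition U where "U = {x. P x \<noteq> {}}"
definition Rel where "Rel = {(a,b). adj a b \<and> (a \<in> U \<or> b \<in> U)}"
definition Gcl where "Gcl C = {y. \<exists>c\<in>C. (c,y) \<in> Rel\<^sup>*}"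

lemma Gcl_sub: "C \<subseteq> Gcl C" by (auto simp: Gcl_def)

lemma Gcl_step: "x \<in> Gcl C \<Longrightarrow> (x,y) \<in> Rel \<Longrightarrow> y \<in> Gcl C"
  unfolding Gcl_def by (auto intro: rtrancl_into_rtrancl)

lemma Gcl_cases: "y \<in> Gcl C \<Longrightarrow> y \<in> C \<or> y \<in> U \<or> (\<exists>a\<in>U. adj a y)"
  unfolding Gcl_def
proof (elim CollectE bexE)
  fix c assume c: "c \<in> C" and r: "(c,y) \<in> Rel\<^sup>*"
  from r show ?thesis
  proof (cases rule: rtranclE)
    case base then show ?thesis using c by simp
  next
    case (step a) then show ?thesis by (auto simp: Rel_def)
  qed
qed

lemma Gcl_finite: "finite U \<Longrightarrow> finite C \<Longrightarrow> finite (Gcl C)"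
proof -
  assume fU: "finite U" and fC: "finite C"
  have "Gcl C \<subseteq> C \<union> U \<union> (\<Union>a\<in>U. nbrs a)"
    using Gcl_cases by (fastforce simp: in_nbrs)
  moreover have "finite (C \<union> U \<union> (\<Union>a\<in>U. nbrs a))" using fU fC by auto
  ultimately show ?thesis by (rule finite_subset)
qed

lemma Gcl_conn:
  assumes "conn C z" shows "conn (Gcl C) z"
proof -
  have *: "(c,y) \<in> (edg (Gcl C))\<^sup>*" if c: "c \<in> C" and r: "(c,y) \<in> Rel\<^sup>*" for c y
    using r
  proof (induction rule: rtrancl_induct)
    case base then show ?case by simp
  next
    case (step b y)
    have "b \<in> Gcl C" "y \<in> Gcl C" using c step(1,2) unfolding Gcl_def
      by (auto intro: rtrancl_into_rtrancl)
    then have "(b,y) \<in> edg (Gcl C)" using step(2) by (auto simp: edg_def Rel_def)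
    with step(3) show ?case by (rule rtrancl_into_rtrancl)
  qed
  show ?thesis unfolding conn_def
  proof (intro conjI ballI)
    show "z \<in> Gcl C" using assms Gcl_sub by (auto simp: conn_def)
  next
    fix y assume "y \<in> Gcl C"
    then obtain c where c: "c \<in> C" "(c,y) \<in> Rel\<^sup>*" by (auto simp: Gcl_def)
    have "(z,c) \<in> (edg C)\<^sup>*" using assms c by (auto simp: conn_def)
    then have "(z,c) \<in> (edg (Gcl C))\<^sup>*" using edg_mono[OF Gcl_sub] by blast
    with *[OF c] show "(z,y) \<in> (edg (Gcl C))\<^sup>*" by simp
  qed
qed

lemma card_P_pos: "x \<in> U \<Longrightarrow> int (card (P x)) \<ge> 1"
  using fin[of x] by (auto simp: U_def Suc_le_eq card_gt_0_iff)

lemma conservation: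
  assumes fG: "finite G" and clos: "\<And>x y. x \<in> G \<Longrightarrow> y \<in> U \<Longrightarrow> adj x y \<Longrightarrow> y \<in> G"
  shows "(\<Sum>x\<in>G. final_config \<eta> P x) \<le> (\<Sum>x\<in>G. int (\<eta> x))"
proof -
  define c where "c w = int (card (P w))" for w
  have c0: "w \<notin> U \<Longrightarrow> c w = 0" for w by (simp add: c_def U_def)
  have inner: "(\<Sum>w\<in>nbrs x. c w) = (\<Sum>w\<in>G. if adj x w then c w else 0)" if x: "x \<in> G" for x
  proof -
    have "(\<Sum>w\<in>nbrs x. c w) = (\<Sum>w\<in>nbrs x \<inter> G. c w)"
      by (rule sum.mono_neutral_right) (use x clos c0 in \<open>force simp: in_nbrs\<close>)+
    also have "\<dots> = (\<Sum>w\<in>G. if adj x w then c w else 0)"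
    proof -
      have "nbrs x \<inter> G = {w\<in>G. adj x w}" by (auto simp: in_nbrs)
      then show ?thesis by (simp add: sum.inter_filter fG)
    qed
    finally show ?thesis .
  qed
  have "(\<Sum>x\<in>G. \<Sum>w\<in>nbrs x. c w) = (\<Sum>x\<in>G. \<Sum>w\<in>G. if adj x w then c w else 0)"
    by (rule sum.cong) (simp_all add: inner)
  also have "\<dots> = (\<Sum>w\<in>G. \<Sum>x\<in>G. if adj x w then c w else 0)" by (rule sum.swap)
  also have "\<dots> = (\<Sum>w\<in>G. c w * int (card {x\<in>G. adj x w}))"
  proof (rule sum.cong)
    fix w assume "w \<in> G"
    have "(\<Sum>x\<in>G. if adj x w then c w else 0) = (\<Sum>x\<in>{x\<in>G. adj x w}. c w)"
      by (subst sum.inter_filter[symmetric]) (use fG in auto)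
    then show "(\<Sum>x\<in>G. if adj x w then c w else 0) = c w * int (card {x\<in>G. adj x w})"
      by simp
  qed simp
  also have "\<dots> \<le> (\<Sum>w\<in>G. c w * (2 * int CARD('d)))"
  proof (rule sum_mono)
    fix w
    have "card {x\<in>G. adj x w} \<le> card (nbrs w)"
      by (rule card_mono) (auto simp: in_nbrs adj_sym)
    then have "int (card {x\<in>G. adj x w}) \<le> 2 * int CARD('d)" using card_nbrs[of w] by linarith
    moreover have "c w \<ge> 0" by (simp add: c_def)
    ultimately show "c w * int (card {x\<in>G. adj x w}) \<le> c w * (2 * int CARD('d))"
      by (intro mult_left_mono) auto
  qed
  finally have S: "(\<Sum>x\<in>G. \<Sum>w\<in>nbrs x. c w) \<le> (\<Sum>w\<in>G. c w * (2 * int CARD('d)))" .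
  have "(\<Sum>x\<in>G. final_config \<eta> P x) = (\<Sum>x\<in>G. int (\<eta> x)) - (\<Sum>x\<in>G. c x * (2 * int CARD('d)))
      + (\<Sum>x\<in>G. \<Sum>w\<in>nbrs x. c w)"
    unfolding final_config_def c_def by (simp add: sum.distrib sum_subtractf algebra_simps)
  with S show ?thesis by linarith
qed

lemma core:
  assumes fU: "finite U" and fC: "finite C" and cC: "conn C z"
    and W: "C \<subseteq> U \<union> {x. final_config \<eta> P x > 0}"
  shows "\<exists>G. finite G \<and> conn G z \<and> C \<subseteq> G \<and> int (card G) \<le> 2 * (\<Sum>x\<in>G. int (\<eta> x))"
proof (intro exI conjI)
  let ?G = "Gcl C"
  show fG: "finite ?G" by (rule Gcl_finite[OF fU fC])
  show "conn ?G z" by (rule Gcl_conn[OF cC])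
  show "C \<subseteq> ?G" by (rule Gcl_sub)
  have clos: "y \<in> ?G" if "x \<in> ?G" "y \<in> U" "adj x y" for x y
    using Gcl_step[OF that(1)] that by (auto simp: Rel_def)
  have clos2: "y \<in> ?G" if "x \<in> ?G" "x \<in> U" "adj x y" for x y
    using Gcl_step[OF that(1)] that by (auto simp: Rel_def)
  define Pos where "Pos = {x \<in> ?G. final_config \<eta> P x > 0}"
  define Z where "Z = {x \<in> ?G. final_config \<eta> P x \<le> 0}"
  have ZU: "x \<in> U" if "x \<in> Z" for x
  proof (rule ccontr)
    assume nU: "x \<notin> U"
    have x0: "final_config \<eta> P x \<le> 0" "x \<in> ?G" using that by (auto simp: Z_def)
    from Gcl_cases[OF x0(2)] nU consider "x \<in> C" | a where "a \<in> U" "adj a x" by blast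
    then show False
    proof cases
      case 1 then show False using W nU x0 by auto
    next
      case 2
      have "P x = {}" using nU by (simp add: U_def)
      from final_empty_nbr[OF this, of a] card_P_pos[OF 2(1)] 2(2) x0 show False
        by (simp add: adj_sym)
    qed
  qed
  obtain i :: 'd where True by blast
  have inj: "inj_on (\<lambda>x. x + ev i) Z" by (auto simp: inj_on_def)
  have img: "(\<lambda>x. x + ev i) ` Z \<subseteq> Pos"
  proof
    fix y assume "y \<in> (\<lambda>x. x + ev i) ` Z"
    then obtain x where x: "x \<in> Z" "y = x + ev i" by blast
    have xU: "x \<in> U" by (rule ZU[OF x(1)])
    have "final_config \<eta> P y > 0"
      using zero_nbr_pos[of x y] xU x adj_plus by (auto simp: U_def Z_def)
    moreover have "y \<in> ?G" using clos2[of x y] x xU adj_plus Z_def by auto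
    ultimately show "y \<in> Pos" by (simp add: Pos_def)
  qed
  have fPos: "finite Pos" "finite Z" using fG by (auto simp: Pos_def Z_def)
  have cZ: "card Z \<le> card Pos"
    using card_inj_on_le[OF inj img fPos(1)] .
  have GPZ: "?G = Pos \<union> Z" "Pos \<inter> Z = {}" by (auto simp: Pos_def Z_def)
  have cG: "card ?G = card Pos + card Z" using GPZ fPos by (simp add: card_Un_disjoint)
  have "int (card Pos) = (\<Sum>x\<in>Pos. 1)" by simp
  also have "\<dots> \<le> (\<Sum>x\<in>Pos. final_config \<eta> P x)" by (rule sum_mono) (auto simp: Pos_def)
  also have "\<dots> \<le> (\<Sum>x\<in>?G. final_config \<eta> P x)"
    by (rule sum_mono2[OF fG]) (auto simp: Pos_def final_nonneg)
  also have "\<dots> \<le> (\<Sum>x\<in>?G. int (\<eta> x))" by (rule conservation[OF fG clos])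
  finally show "int (card ?G) \<le> 2 * (\<Sum>x\<in>?G. int (\<eta> x))" using cG cZ by linarith
qed

end



lemma legalD:
  fixes \<eta> :: "'d::finite config"
  assumes "legal_procedure \<eta> T"
  shows "\<And>x. T x \<subseteq> {0..}" "\<And>x t. finite (T x \<inter> {0..t})"
    "\<And>x s. s \<in> T x \<Longrightarrow> before \<eta> T s x \<ge> 2 * int CARD('d)"
    "\<not> (\<exists>xs ts :: nat \<Rightarrow> _. \<forall>k. ts k \<in> T (xs k) \<and> adj (xs k) (xs (Suc k)) \<and> ts (Suc k) < ts k)"
proof -
  note h = assms[unfolded legal_procedure_def]
  show "\<And>x. T x \<subseteq> {0..}" using h[THEN conjunct1] by blast
  show "\<And>x t. finite (T x \<inter> {0..t})" using h[THEN conjunct2, THEN conjunct1] by blast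
  show "\<And>x s. s \<in> T x \<Longrightarrow> before \<eta> T s x \<ge> 2 * int CARD('d)"
    using h[THEN conjunct2, THEN conjunct2, THEN conjunct1] by blast
  show "\<not> (\<exists>xs ts :: nat \<Rightarrow> _. \<forall>k. ts k \<in> T (xs k) \<and> adj (xs k) (xs (Suc k)) \<and> ts (Suc k) < ts k)"
    using h[THEN conjunct2, THEN conjunct2, THEN conjunct2] .
qed

definition predR :: "('d::finite site \<Rightarrow> real set) \<Rightarrow> (('d site \<times> real) \<times> ('d site \<times> real)) set" where
  "predR T = {((y,t'),(x,t)). t \<in> T x \<and> t' \<in> T y \<and> adj x y \<and> t' < t}"

lemma wf_predR:
  assumes "legal_procedure \<eta> T" shows "wf (predR T)"
proof (rule ccontr)
  assume "\<not> wf (predR T)"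
  then obtain f where f: "\<And>i. (f (Suc i), f i) \<in> predR T"
    unfolding wf_iff_no_infinite_down_chain by blast
  define xs where "xs k = fst (f k)" for k
  define ts where "ts k = snd (f k)" for k
  have "\<forall>k. ts k \<in> T (xs k) \<and> adj (xs k) (xs (Suc k)) \<and> ts (Suc k) < ts k"
  proof
    fix k
    show "ts k \<in> T (xs k) \<and> adj (xs k) (xs (Suc k)) \<and> ts (Suc k) < ts k"
      using f[of k] by (cases "f k", cases "f (Suc k)") (auto simp: predR_def xs_def ts_def)
  qed
  with legalD(4)[OF assms] show False by blast
qed

lemma preds_finite:
  assumes "legal_procedure \<eta> T"
  shows "finite {e. (e, (x,t)) \<in> predR T}"
proof -
  have "{e. (e, (x,t)) \<in> predR T} \<subseteq> (\<Union>y\<in>nbrs x. {y} \<times> (T y \<inter> {0..t}))"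
    using legalD(1)[OF assms] by (fastforce simp: predR_def in_nbrs)
  moreover have "finite (\<Union>y\<in>nbrs x. {y} \<times> (T y \<inter> {0..t}))"
    using legalD(2)[OF assms] by auto
  ultimately show ?thesis by (rule finite_subset)
qed

lemma anc_finite:
  assumes L: "legal_procedure \<eta> T"
  shows "finite {e'. (e', e) \<in> (predR T)\<^sup>+}"
  using wf_predR[OF L]
proof (induction e rule: wf_induct_rule)
  case (less e)
  obtain x t where e: "e = (x,t)" by (cases e)
  let ?p = "{e'. (e', e) \<in> predR T}"
  have "{e'. (e', e) \<in> (predR T)\<^sup>+} \<subseteq> ?p \<union> (\<Union>p\<in>?p. {e'. (e', p) \<in> (predR T)\<^sup>+})"
    by (auto elim: tranclE)
  moreover have "finite (?p \<union> (\<Union>p\<in>?p. {e'. (e', p) \<in> (predR T)\<^sup>+}))"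
    using preds_finite[OF L, of x t] less.IH by (auto simp: e)
  ultimately show ?case by (rule finite_subset)
qed

lemma subproc:
  fixes \<eta> :: "'d::finite config"
  assumes L: "legal_procedure \<eta> T" and fE: "finite E" and Ev: "\<And>x t. (x,t) \<in> E \<Longrightarrow> t \<in> T x"
  shows "\<exists>P. fproc \<eta> P \<and> finite {x. P x \<noteq> {}} \<and> (\<forall>x. P x \<subseteq> T x) \<and> (\<forall>x t. (x,t) \<in> E \<longrightarrow> t \<in> P x)"
proof -
  define A where "A = E \<union> (\<Union>e\<in>E. {e'. (e', e) \<in> (predR T)\<^sup>+})"
  have fA: "finite A" using fE anc_finite[OF L] by (auto simp: A_def)
  have Aev: "t \<in> T x" if "(x,t) \<in> A" for x t
  proof -
    have "(x,t) \<in> E \<or> (\<exists>e. ((x,t),e) \<in> (predR T)\<^sup>+)" using that by (auto simp: A_def)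
    then show ?thesis
    proof
      assume "\<exists>e. ((x,t),e) \<in> (predR T)\<^sup>+"
      then obtain e where "((x,t),e) \<in> predR T" by (auto dest: tranclD)
      then show ?thesis by (cases e) (simp add: predR_def)
    qed (rule Ev)
  qed
  have Adown: "b \<in> A" if "a \<in> A" "(b,a) \<in> predR T" for a b
  proof -
    from that(1) consider "a \<in> E" | e where "e \<in> E" "(a,e) \<in> (predR T)\<^sup>+" by (auto simp: A_def)
    then show ?thesis
    proof cases
      case 1 then show ?thesis using that(2) by (auto simp: A_def)
    next
      case 2
      have "(b,e) \<in> (predR T)\<^sup>+" using that(2) 2(2) by (rule trancl_into_trancl2)
      then show ?thesis using 2(1) by (auto simp: A_def)
    qed
  qed
  define P where "P x = {t \<in> T x. \<exists>t''. (x,t'') \<in> A \<and> t \<le> t''}" for x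
  have Psub: "P x \<subseteq> T x" for x by (auto simp: P_def)
  have finP: "finite (P x)" for x
  proof -
    define Sx where "Sx = {t''. (x,t'') \<in> A}"
    have "Sx \<subseteq> snd ` A" by (force simp: Sx_def)
    then have fSx: "finite Sx" using fA by (meson finite_imageI finite_subset)
    have "P x \<subseteq> (\<Union>t''\<in>Sx. T x \<inter> {0..t''})"
    proof
      fix t assume t: "t \<in> P x"
      then obtain t'' where "t'' \<in> Sx" "t \<le> t''" "t \<in> T x" by (auto simp: P_def Sx_def)
      moreover have "t \<ge> 0" using legalD(1)[OF L] \<open>t \<in> T x\<close> by auto
      ultimately show "t \<in> (\<Union>t''\<in>Sx. T x \<inter> {0..t''})" by auto
    qed
    moreover have "finite (\<Union>t''\<in>Sx. T x \<inter> {0..t''})"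
      using fSx legalD(2)[OF L] by blast
    ultimately show ?thesis by (rule finite_subset)
  qed
  have bef: "before \<eta> P s x = before \<eta> T s x" if s: "s \<in> P x" for s x
  proof -
    obtain t'' where t'': "(x,t'') \<in> A" "s \<le> t''" using s by (auto simp: P_def)
    have tx: "t'' \<in> T x" using Aev[OF t''(1)] .
    have own: "{t \<in> P x. t < s} = {t \<in> T x. t < s}"
      using t'' by (auto simp: P_def)
    have nb: "{t \<in> P y. t < s} = {t \<in> T y. t < s}" if y: "y \<in> nbrs x" for y
    proof
      show "{t \<in> P y. t < s} \<subseteq> {t \<in> T y. t < s}" using Psub by auto
    next
      show "{t \<in> T y. t < s} \<subseteq> {t \<in> P y. t < s}"
      proof
        fix t assume t: "t \<in> {t \<in> T y. t < s}"
        have "((y,t),(x,t'')) \<in> predR T" using t tx y t'' by (auto simp: predR_def in_nbrs)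
        then have "(y,t) \<in> A" by (rule Adown[OF t''(1)])
        then show "t \<in> {t \<in> P y. t < s}" using t by (auto simp: P_def)
      qed
    qed
    have "(\<Sum>y\<in>nbrs x. int (card {t \<in> P y. t < s})) = (\<Sum>y\<in>nbrs x. int (card {t \<in> T y. t < s}))"
      by (rule sum.cong[OF refl]) (simp only: nb)
    then show ?thesis unfolding before_def own by simp
  qed
  have fp: "fproc \<eta> P"
  proof
    show "\<And>x. finite (P x)" by (rule finP)
    fix x s assume s: "s \<in> P x"
    then have "s \<in> T x" using Psub by blast
    show "2 * int CARD('d) \<le> before \<eta> P s x"
      using legalD(3)[OF L \<open>s \<in> T x\<close>] bef[OF s] by simp
  qed
  have "{x. P x \<noteq> {}} \<subseteq> fst ` A"
  proof
    fix x assume "x \<in> {x. P x \<noteq> {}}"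
    then obtain t t'' where "(x,t'') \<in> A" by (auto simp: P_def)
    then show "x \<in> fst ` A" by (rule rev_image_eqI) simp
  qed
  then have "finite {x. P x \<noteq> {}}" using fA by (meson finite_imageI finite_subset)
  moreover have "(x,t) \<in> E \<Longrightarrow> t \<in> P x" for x t
  proof -
    assume "(x,t) \<in> E"
    then have "(x,t) \<in> A" "t \<in> T x" using Ev by (auto simp: A_def)
    then show "t \<in> P x" unfolding P_def by blast
  qed
  ultimately show ?thesis using fp Psub by blast
qed

lemma main_extract:
  fixes \<eta> :: "'d::finite config"
  assumes L: "legal_procedure \<eta> T" and fC: "finite C" and cC: "conn C z"
    and W: "\<And>x. x \<in> C \<Longrightarrow> T x \<noteq> {} \<or> \<eta> x > 0 \<or> (\<exists>w. adj x w \<and> T w \<noteq> {})"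
  shows "\<exists>G. finite G \<and> conn G z \<and> C \<subseteq> G \<and> int (card G) \<le> 2 * (\<Sum>x\<in>G. int (\<eta> x))"
proof -
  define S where "S = {x \<in> C \<union> (\<Union>c\<in>C. nbrs c). T x \<noteq> {}}"
  define E where "E = (\<lambda>x. (x, SOME t. t \<in> T x)) ` S"
  have fS: "finite S" using fC by (auto simp: S_def)
  have Ev: "t \<in> T x" if xt: "(x,t) \<in> E" for x t
  proof -
    obtain y where y: "y \<in> S" "(x,t) = (y, SOME t. t \<in> T y)" using xt unfolding E_def by blast
    then have "T y \<noteq> {}" by (simp add: S_def)
    then have "(SOME t. t \<in> T y) \<in> T y" by (simp add: some_in_eq)
    then show ?thesis using y(2) by simp
  qed
  have fE: "finite E" by (simp add: E_def fS)
  from subproc[OF L fE Ev] obtain P where P: "fproc \<eta> P" "finite {x. P x \<noteq> {}}" "\<And>x. P x \<subseteq> T x"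
    "\<And>x t. (x,t) \<in> E \<Longrightarrow> t \<in> P x"
    by blast
  interpret fproc \<eta> P by (rule P(1))
  have SP: "P x \<noteq> {}" if "x \<in> S" for x
  proof -
    have "(x, SOME t. t \<in> T x) \<in> E" using that by (simp add: E_def)
    then show ?thesis using P(4) by blast
  qed
  have "C \<subseteq> U \<union> {x. final_config \<eta> P x > 0}"
  proof
    fix x assume x: "x \<in> C"
    show "x \<in> U \<union> {x. final_config \<eta> P x > 0}"
    proof (cases "T x = {}")
      case False
      then have "x \<in> S" using x unfolding S_def by blast
      then have "P x \<noteq> {}" by (rule SP)
      then show ?thesis unfolding U_def by blast
    next
      case True
      then have Px: "P x = {}" using P(3)[of x] by blast
      have "\<eta> x > 0 \<or> (\<exists>w. adj x w \<and> T w \<noteq> {})" using W[OF x] True by blast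
      then have "final_config \<eta> P x > 0"
      proof
        assume "\<eta> x > 0"
        moreover have "final_config \<eta> P x \<ge> int (\<eta> x)"
          unfolding final_empty[OF Px] by (simp add: sum_nonneg)
        ultimately show ?thesis by linarith
      next
        assume "\<exists>w. adj x w \<and> T w \<noteq> {}"
        then obtain w where w: "adj x w" "T w \<noteq> {}" by blast
        have "w \<in> nbrs x" using w(1) by (simp add: in_nbrs)
        then have "w \<in> S" using x w(2) unfolding S_def by blast
        then have "w \<in> U" using SP unfolding U_def by blast
        have "final_config \<eta> P x \<ge> 1"
          using final_empty_nbr[OF Px w(1)] card_P_pos[OF \<open>w \<in> U\<close>] by linarith
        then show ?thesis by simp
      qed
      then show ?thesis by blast
    qed
  qed
  moreover have "finite U" using P(2) unfolding U_def .
  ultimately show ?thesis using core fC cC by blast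
qed



fun cfg :: "'d::finite config \<Rightarrow> nat \<Rightarrow> 'd site \<Rightarrow> int" where
  "cfg \<eta> 0 = (\<lambda>x. int (\<eta> x))"
| "cfg \<eta> (Suc r) = (\<lambda>x. cfg \<eta> r x - (if cfg \<eta> r x \<ge> 2 * int CARD('d) then 2 * int CARD('d) else 0)
      + int (card {y \<in> nbrs x. cfg \<eta> r y \<ge> 2 * int CARD('d)}))"

definition tp :: "'d::finite config \<Rightarrow> nat \<Rightarrow> 'd site \<Rightarrow> bool" where
  "tp \<eta> r x \<longleftrightarrow> cfg \<eta> r x \<ge> 2 * int CARD('d)"

definition Tpar :: "'d::finite config \<Rightarrow> 'd site \<Rightarrow> real set" where
  "Tpar \<eta> x = real ` {r. tp \<eta> r x}"

definition cnt where "cnt \<eta> x r = card {r'. r' < r \<and> tp \<eta> r' x}"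

lemma cnt_Suc: "cnt \<eta> x (Suc r) = cnt \<eta> x r + (if tp \<eta> r x then 1 else 0)"
proof -
  have "{r'. r' < Suc r \<and> tp \<eta> r' x} = {r'. r' < r \<and> tp \<eta> r' x} \<union> (if tp \<eta> r x then {r} else {})"
    by (auto simp: less_Suc_eq)
  then show ?thesis unfolding cnt_def by (auto simp: card_insert_if)
qed

lemma card_Tpar_less: "card {t \<in> Tpar \<eta> x. t < real r} = cnt \<eta> x r"
proof -
  have "{t \<in> Tpar \<eta> x. t < real r} = real ` {r'. r' < r \<and> tp \<eta> r' x}"
    by (auto simp: Tpar_def)
  then show ?thesis unfolding cnt_def by (simp add: card_image inj_on_def)
qed

lemma cfg_before:
  fixes \<eta> :: "'d::finite config"
  shows "cfg \<eta> r x = before \<eta> (Tpar \<eta>) (real r) x"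
proof (induction r arbitrary: x)
  case 0
  have "\<And>y. card {t \<in> Tpar \<eta> y. t < real (0::nat)} = 0"
    by (subst card_Tpar_less) (simp add: cnt_def)
  then show ?case unfolding before_def by simp
next
  case (Suc r)
  have b: "before \<eta> (Tpar \<eta>) (real r') x = int (\<eta> x) - 2 * int CARD('d) * int (cnt \<eta> x r')
      + (\<Sum>y\<in>nbrs x. int (cnt \<eta> y r'))" for r' x
    unfolding before_def card_Tpar_less by simp
  have s: "(\<Sum>y\<in>nbrs x. int (cnt \<eta> y (Suc r))) = (\<Sum>y\<in>nbrs x. int (cnt \<eta> y r))
      + int (card {y \<in> nbrs x. tp \<eta> r y})"
  proof -
    have "(\<Sum>y\<in>nbrs x. int (cnt \<eta> y (Suc r))) = (\<Sum>y\<in>nbrs x. int (cnt \<eta> y r) + (if tp \<eta> r y then 1 else 0))"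
      by (rule sum.cong[OF refl]) (simp add: cnt_Suc)
    also have "\<dots> = (\<Sum>y\<in>nbrs x. int (cnt \<eta> y r)) + (\<Sum>y\<in>nbrs x. (if tp \<eta> r y then 1 else 0))"
      by (rule sum.distrib)
    also have "(\<Sum>y\<in>nbrs x. (if tp \<eta> r y then 1 else 0::int)) = int (card {y \<in> nbrs x. tp \<eta> r y})"
      by (simp add: sum.If_cases Int_def)
    finally show ?thesis .
  qed
  show ?case
    using Suc.IH[of x] Suc.IH s unfolding b
    by (simp add: cnt_Suc tp_def algebra_simps)
qed

lemma no_nat_desc: "\<not> (\<forall>k. (f :: nat \<Rightarrow> nat) (Suc k) < f k)"
proof
  assume h: "\<forall>k. f (Suc k) < f k"
  have "f k + k \<le> f 0" for k
  proof (induction k)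
    case 0 show ?case by simp
  next
    case (Suc k)
    have "f (Suc k) < f k" using h by blast
    with Suc.IH show ?case by simp
  qed
  from this[of "Suc (f 0)"] show False by simp
qed

lemma Tpar_legal:
  fixes \<eta> :: "'d::finite config"
  shows "legal_procedure \<eta> (Tpar \<eta>)"
  unfolding legal_procedure_def
proof (intro conjI allI impI notI)
  fix x show "Tpar \<eta> x \<subseteq> {0..}" by (auto simp: Tpar_def)
next
  fix x and t :: real
  have "Tpar \<eta> x \<inter> {0..t} \<subseteq> real ` {..nat \<lceil>t\<rceil>}"
  proof
    fix s assume s: "s \<in> Tpar \<eta> x \<inter> {0..t}"
    then obtain r where r: "s = real r" "real r \<le> t" by (auto simp: Tpar_def)
    then have "r \<le> nat \<lceil>t\<rceil>" by linarith
    then show "s \<in> real ` {..nat \<lceil>t\<rceil>}" using r by auto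
  qed
  then show "finite (Tpar \<eta> x \<inter> {0..t})" by (rule finite_subset) auto
next
  fix x s assume "s \<in> Tpar \<eta> x"
  then obtain r where r: "s = real r" "tp \<eta> r x" by (auto simp: Tpar_def)
  then show "2 * int CARD('d) \<le> before \<eta> (Tpar \<eta>) s x"
    using cfg_before[of \<eta> r x] by (simp add: tp_def)
next
  assume "\<exists>xs ts :: nat \<Rightarrow> _. \<forall>k. ts k \<in> Tpar \<eta> (xs k) \<and> adj (xs k) (xs (Suc k)) \<and> ts (Suc k) < ts k"
  then obtain xs and ts :: "nat \<Rightarrow> real" where h: "\<forall>k. ts k \<in> Tpar \<eta> (xs k) \<and> ts (Suc k) < ts k" by blast
  define f where "f k = nat \<lfloor>ts k\<rfloor>" for k
  have "ts k = real (f k)" for k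
  proof -
    obtain r where "ts k = real r" using h by (auto simp: Tpar_def)
    then show ?thesis by (simp add: f_def)
  qed
  then have "\<forall>k. f (Suc k) < f k" using h by (metis of_nat_less_iff)
  with no_nat_desc show False by blast
qed



definition good_at :: "'d::finite config \<Rightarrow> 'd site \<Rightarrow> nat \<Rightarrow> bool" where
  "good_at \<eta> z M \<longleftrightarrow> (\<forall>G. finite G \<and> conn G z \<and> M \<le> card G \<longrightarrow> 2 * (\<Sum>x\<in>G. int (\<eta> x)) < int (card G))"

definition good :: "'d::finite config \<Rightarrow> bool" where
  "good \<eta> \<longleftrightarrow> (\<forall>z. \<exists>M. good_at \<eta> z M)"

lemma bound:
  fixes \<eta> :: "'d::finite config"
  assumes L: "legal_procedure \<eta> T" and g: "good_at \<eta> z M" and fC: "finite C" and cC: "conn C z"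
    and W: "\<And>x. x \<in> C \<Longrightarrow> T x \<noteq> {} \<or> \<eta> x > 0 \<or> (\<exists>w. adj x w \<and> T w \<noteq> {})"
  shows "card C < M"
proof -
  obtain G where G: "finite G" "conn G z" "C \<subseteq> G" "int (card G) \<le> 2 * (\<Sum>x\<in>G. int (\<eta> x))"
    using main_extract[OF L fC cC W] by blast
  have "card G < M"
  proof (rule ccontr)
    assume "\<not> card G < M"
    then have "M \<le> card G" by simp
    with g G(1,2) have "2 * (\<Sum>x\<in>G. int (\<eta> x)) < int (card G)" unfolding good_at_def by blast
    with G(4) show False by linarith
  qed
  moreover have "card C \<le> card G" using G(1,3) by (rule card_mono)
  ultimately show ?thesis by simp
qed

definition lnp :: "'d::finite site \<Rightarrow> 'd \<Rightarrow> nat \<Rightarrow> 'd site" where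
  "lnp x i j = x + (\<chi> l. if l = i then int j else 0)"

lemma lnp_0: "lnp x i 0 = x" by (simp add: lnp_def vec_eq_iff)
lemma lnp_Suc: "lnp x i (Suc j) = lnp x i j + ev i" by (simp add: lnp_def ev_def vec_eq_iff)
lemma lnp_adj: "adj (lnp x i j) (lnp x i (Suc j))" unfolding lnp_Suc by (rule adj_plus)
lemma lnp_inj: "inj (lnp x i)"
  by (auto simp: inj_def lnp_def vec_eq_iff)

lemma lnp_conn: "conn (lnp x i ` {..k}) x"
  unfolding conn_def
proof (intro conjI ballI)
  show "x \<in> lnp x i ` {..k}" using lnp_0 by (metis atMost_iff image_eqI le0)
  fix y assume "y \<in> lnp x i ` {..k}"
  then obtain j where j: "j \<le> k" "y = lnp x i j" by auto
  have "(x, lnp x i j) \<in> (edg (lnp x i ` {..k}))\<^sup>*" using j(1)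
  proof (induction j)
    case 0 then show ?case by (simp add: lnp_0)
  next
    case (Suc j)
    then have "(lnp x i j, lnp x i (Suc j)) \<in> edg (lnp x i ` {..k})"
      using lnp_adj by (auto simp: edg_def)
    with Suc show ?case by (meson Suc_leD rtrancl.rtrancl_into_rtrancl)
  qed
  with j show "(x, y) \<in> (edg (lnp x i ` {..k}))\<^sup>*" by simp
qed

lemma lnp_card: "card (lnp x i ` {..k}) = Suc k"
  using lnp_inj[of x i] by (simp add: card_image inj_on_subset)

lemma cfg_mono_run:
  fixes \<eta> :: "'d::finite config"
  assumes nt: "\<And>r. r \<ge> R \<Longrightarrow> \<not> tp \<eta> r w" and a: "adj y w"
  shows "cfg \<eta> (R + j) w \<ge> cfg \<eta> R w + int (card {r'. R \<le> r' \<and> r' < R + j \<and> tp \<eta> r' y})"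
proof (induction j)
  case 0 then show ?case by simp
next
  case (Suc j)
  have yn: "y \<in> nbrs w" using a by (simp add: in_nbrs adj_sym)
  have ntw: "\<not> cfg \<eta> (R + j) w \<ge> 2 * int CARD('d)" using nt[of "R+j"] by (simp add: tp_def)
  have step: "cfg \<eta> (Suc (R + j)) w = cfg \<eta> (R + j) w + int (card {y' \<in> nbrs w. tp \<eta> (R+j) y'})"
    using ntw by (simp add: tp_def)
  have "int (card {y' \<in> nbrs w. tp \<eta> (R+j) y'}) \<ge> (if tp \<eta> (R+j) y then 1 else 0)"
  proof (cases "tp \<eta> (R+j) y")
    case True
    then have "y \<in> {y' \<in> nbrs w. tp \<eta> (R+j) y'}" using yn by simp
    then have "card {y' \<in> nbrs w. tp \<eta> (R+j) y'} > 0" by (auto simp: card_gt_0_iff)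
    then show ?thesis using True by simp
  qed simp
  moreover have "card {r'. R \<le> r' \<and> r' < R + Suc j \<and> tp \<eta> r' y}
      = card {r'. R \<le> r' \<and> r' < R + j \<and> tp \<eta> r' y} + (if tp \<eta> (R+j) y then 1 else 0)"
  proof -
    have "{r'. R \<le> r' \<and> r' < R + Suc j \<and> tp \<eta> r' y} = {r'. R \<le> r' \<and> r' < R + j \<and> tp \<eta> r' y}
       \<union> (if tp \<eta> (R+j) y then {R+j} else {})" by (auto simp: less_Suc_eq)
    then show ?thesis by (auto simp: card_insert_if)
  qed
  ultimately show ?case using Suc.IH step
    by (cases "tp \<eta> (R+j) y") (simp_all del: cfg.simps)
qed

lemma inf_spread:
  fixes \<eta> :: "'d::finite config"
  assumes iy: "infinite {r. tp \<eta> r y}" and a: "adj y w"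
  shows "infinite {r. tp \<eta> r w}"
proof
  assume "finite {r. tp \<eta> r w}"
  then obtain R where R: "{r. tp \<eta> r w} \<subseteq> {..<R}" using finite_nat_bounded by blast
  have nt: "\<And>r. r \<ge> R \<Longrightarrow> \<not> tp \<eta> r w" using R by force
  define K where "K = nat (2 * int CARD('d) - cfg \<eta> R w)"
  have "infinite ({r. tp \<eta> r y} - {..<R})" using iy by simp
  then obtain F where F: "F \<subseteq> {r. tp \<eta> r y} - {..<R}" "finite F" "card F = K"
    using infinite_arbitrarily_large by blast
  obtain j where j: "F \<subseteq> {..<R + j}"
  proof -
    obtain k where "F \<subseteq> {..<k}" using F(2) finite_nat_bounded by blast
    then have "F \<subseteq> {..<R + k}" by auto
    then show thesis by (rule that)
  qed
  have "F \<subseteq> {r'. R \<le> r' \<and> r' < R + j \<and> tp \<eta> r' y}" using F(1) j by auto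
  then have "K \<le> card {r'. R \<le> r' \<and> r' < R + j \<and> tp \<eta> r' y}"
    using F(3) by (metis (no_types, lifting) card_mono finite_nat_set_iff_bounded mem_Collect_eq)
  then have Kc: "int K \<le> int (card {r'. R \<le> r' \<and> r' < R + j \<and> tp \<eta> r' y})" by simp
  have h: "cfg \<eta> (R + j) w \<ge> cfg \<eta> R w + int (card {r'. R \<le> r' \<and> r' < R + j \<and> tp \<eta> r' y})"
    by (rule cfg_mono_run[OF nt a])
  from h Kc have "cfg \<eta> (R + j) w \<ge> cfg \<eta> R w + int K" by linarith
  then have "tp \<eta> (R + j) w" unfolding tp_def K_def by linarith
  with nt[of "R+j"] show False by simp
qed

lemma Tpar_stabilizing:
  fixes \<eta> :: "'d::finite config"
  assumes g: "good \<eta>"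
  shows "stabilizing \<eta> (Tpar \<eta>)"
proof -
  have L: "legal_procedure \<eta> (Tpar \<eta>)" by (rule Tpar_legal)
  have finS: "finite {r. tp \<eta> r x}" for x
  proof (rule ccontr)
    assume inf: "infinite {r. tp \<eta> r x}"
    obtain i :: 'd where True by blast
    have infl: "infinite {r. tp \<eta> r (lnp x i j)}" for j
    proof (induction j)
      case 0 then show ?case using inf by (simp add: lnp_0)
    next
      case (Suc j) then show ?case using inf_spread lnp_adj by blast
    qed
    obtain M where M: "good_at \<eta> x M" using g by (auto simp: good_def)
    have "card (lnp x i ` {..M}) < M"
    proof (rule bound[OF L M])
      fix y assume "y \<in> lnp x i ` {..M}"
      then obtain j where yj: "y = lnp x i j" by auto
      have "{r. tp \<eta> r y} \<noteq> {}" using infl[of j] yj by (metis finite.emptyI)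
      then show "Tpar \<eta> y \<noteq> {} \<or> \<eta> y > 0 \<or> (\<exists>w. adj y w \<and> Tpar \<eta> w \<noteq> {})"
        by (auto simp: Tpar_def)
    qed (auto intro: lnp_conn)
    then show False by (simp add: lnp_card)
  qed
  have fin: "finite (Tpar \<eta> x)" for x using finS by (simp add: Tpar_def)
  have stab: "final_config \<eta> (Tpar \<eta>) x \<le> 2 * int CARD('d) - 1" for x
  proof -
    have "finite (\<Union>y\<in>insert x (nbrs x). {r. tp \<eta> r y})" using finS by auto
    then obtain R where R: "(\<Union>y\<in>insert x (nbrs x). {r. tp \<eta> r y}) \<subseteq> {..<R}"
      using finite_nat_bounded by blast
    have all: "card {t \<in> Tpar \<eta> y. t < real R} = card (Tpar \<eta> y)" if "y \<in> insert x (nbrs x)" for y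
    proof -
      have "{t \<in> Tpar \<eta> y. t < real R} = Tpar \<eta> y" using R that by (force simp: Tpar_def)
      then show ?thesis by simp
    qed
    have "final_config \<eta> (Tpar \<eta>) x = before \<eta> (Tpar \<eta>) (real R) x"
      unfolding final_config_def before_def using all by (simp cong: sum.cong)
    also have "\<dots> = cfg \<eta> R x" by (simp add: cfg_before)
    also have "\<dots> < 2 * int CARD('d)"
    proof -
      have "\<not> tp \<eta> R x" using R by blast
      then show ?thesis by (simp add: tp_def)
    qed
    finally show ?thesis by simp
  qed
  show ?thesis unfolding stabilizing_def using L fin stab by blast
qed

lemma good_stabilizable: "good \<eta> \<Longrightarrow> stabilizable \<eta>"
  unfolding stabilizable_def using Tpar_stabilizing by blast



lemma conn_single: "conn {z} z" by (simp add: conn_def)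

lemma conn_Un: "conn A z \<Longrightarrow> conn B z \<Longrightarrow> conn (A \<union> B) z"
  unfolding conn_def
proof (intro conjI ballI)
  assume a: "z \<in> A \<and> (\<forall>y\<in>A. (z, y) \<in> (edg A)\<^sup>*)" and b: "z \<in> B \<and> (\<forall>y\<in>B. (z, y) \<in> (edg B)\<^sup>*)"
  show "z \<in> A \<union> B" using a by simp
  fix y assume "y \<in> A \<union> B"
  then show "(z,y) \<in> (edg (A \<union> B))\<^sup>*"
    using a b edg_mono[of A "A \<union> B"] edg_mono[of B "A \<union> B"] by blast
qed

lemma conn_UN:
  assumes "finite Y" "\<And>y. y \<in> Y \<Longrightarrow> conn (C y) z"
  shows "conn ({z} \<union> (\<Union>y\<in>Y. C y)) z"
  using assms
proof (induction Y rule: finite_induct)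
  case empty then show ?case by (simp add: conn_single)
next
  case (insert y Y)
  have "conn (({z} \<union> (\<Union>y\<in>Y. C y)) \<union> C y) z"
    using insert by (intro conn_Un[of "{z} \<union> (\<Union>y\<in>Y. C y)"]) auto
  then show ?case by (simp add: Un_ac)
qed

lemma path_conn:
  assumes "(a,y) \<in> (edg W)\<^sup>*" "a \<in> W"
  shows "\<exists>C. finite C \<and> conn C a \<and> y \<in> C \<and> C \<subseteq> W"
  using assms(1)
proof (induction rule: rtrancl_induct)
  case base then show ?case using assms(2) conn_single by blast
next
  case (step y b)
  then obtain C where C: "finite C" "conn C a" "y \<in> C" "C \<subseteq> W" by blast
  have bW: "b \<in> W" "adj y b" using step(2) by (auto simp: edg_def)
  have "conn (insert b C) a" unfolding conn_def
  proof (intro conjI ballI)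
    show "a \<in> insert b C" using C by (simp add: conn_def)
    fix x assume "x \<in> insert b C"
    then show "(a, x) \<in> (edg (insert b C))\<^sup>*"
    proof
      assume xb: "x = b"
      have "(a, y) \<in> (edg (insert b C))\<^sup>*" using C edg_mono[of C "insert b C"] by (auto simp: conn_def)
      moreover have "(y, b) \<in> edg (insert b C)" using C bW by (auto simp: edg_def)
      ultimately show ?thesis using xb by simp
    next
      assume "x \<in> C"
      then show ?thesis using C edg_mono[of C "insert b C"] by (auto simp: conn_def)
    qed
  qed
  then show ?case using C bW by auto
qed

lemma W_cond:
  fixes \<eta> :: "'d::finite config"
  assumes "x \<in> W_inf \<eta>"
  shows "stab_proc \<eta> x \<noteq> {} \<or> \<eta> x > 0 \<or> (\<exists>w. adj x w \<and> stab_proc \<eta> w \<noteq> {})"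
proof (rule ccontr)
  let ?T = "stab_proc \<eta>"
  assume "\<not> ?thesis"
  then have h: "?T x = {}" "\<eta> x = 0" "\<And>w. adj x w \<Longrightarrow> ?T w = {}" by auto
  have "final_config \<eta> ?T x = 0"
    unfolding final_config_def using h by (simp add: in_nbrs)
  with assms h(1) show False by (simp add: W_inf_def T_inf_def V_inf_def)
qed

lemma det:
  fixes \<eta> :: "'d::finite config"
  assumes g: "good \<eta>"
  shows "stabilizable \<eta>" "finite (W_inf0 \<eta>)"
    "1 \<le> n \<Longrightarrow> n \<le> card (W_inf0 \<eta>) \<Longrightarrow> \<exists>G. finite G \<and> conn G 0 \<and> n \<le> card G \<and> int (card G) \<le> 2 * (\<Sum>x\<in>G. int (\<eta> x))"
proof -
  show st: "stabilizable \<eta>" by (rule good_stabilizable[OF g])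
  let ?T = "stab_proc \<eta>"
  have sT: "stabilizing \<eta> ?T" using st unfolding stabilizable_def stab_proc_def by (rule someI_ex)
  then have L: "legal_procedure \<eta> ?T" by (simp add: stabilizing_def)
  let ?W = "W_inf \<eta>"
  have W0: "W_inf0 \<eta> = (if 0 \<in> ?W then {y. (0,y) \<in> (edg ?W)\<^sup>*} else {})"
    unfolding W_inf0_def component_def edg_def by simp
  have paths: "\<exists>C. finite C \<and> conn C 0 \<and> y \<in> C \<and> C \<subseteq> ?W" if "y \<in> W_inf0 \<eta>" for y
    using that path_conn[of 0 y ?W] by (auto simp: W0 split: if_splits)
  define Cy where "Cy y = (SOME C. finite C \<and> conn C 0 \<and> y \<in> C \<and> C \<subseteq> ?W)" for y
  have Cy: "finite (Cy y) \<and> conn (Cy y) 0 \<and> y \<in> Cy y \<and> Cy y \<subseteq> ?W" if "y \<in> W_inf0 \<eta>" for y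
    unfolding Cy_def using paths[OF that] by (rule someI_ex)
  have big: "\<exists>G. finite G \<and> conn G 0 \<and> Y \<subseteq> G \<and> int (card G) \<le> 2 * (\<Sum>x\<in>G. int (\<eta> x))"
    if Y: "finite Y" "Y \<subseteq> W_inf0 \<eta>" "Y \<noteq> {}" for Y
  proof -
    have z: "0 \<in> ?W" using Y W0 by (auto split: if_splits)
    define C where "C = {0} \<union> (\<Union>y\<in>Y. Cy y)"
    have fC: "finite C" using Y Cy by (auto simp: C_def)
    have cC: "conn C 0" unfolding C_def by (rule conn_UN) (use Y Cy in auto)
    have CW: "C \<subseteq> ?W" using Y Cy z by (auto simp: C_def)
    have YC: "Y \<subseteq> C" using Y Cy by (auto simp: C_def)
    obtain G where "finite G" "conn G 0" "C \<subseteq> G" "int (card G) \<le> 2 * (\<Sum>x\<in>G. int (\<eta> x))"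
      using main_extract[OF L fC cC W_cond] CW by blast
    then show ?thesis using YC by blast
  qed
  obtain M where M: "good_at \<eta> 0 M" using g by (auto simp: good_def)
  show fin: "finite (W_inf0 \<eta>)"
  proof (rule ccontr)
    assume "infinite (W_inf0 \<eta>)"
    then obtain Y where Y: "Y \<subseteq> W_inf0 \<eta>" "finite Y" "card Y = Suc M"
      using infinite_arbitrarily_large by blast
    then have "Y \<noteq> {}" by auto
    then obtain G where G: "finite G" "conn G 0" "Y \<subseteq> G" "int (card G) \<le> 2 * (\<Sum>x\<in>G. int (\<eta> x))"
      using big Y by blast
    have "card Y \<le> card G" using G by (simp add: card_mono)
    then have "M \<le> card G" using Y by simp
    with M G show False unfolding good_at_def by fastforce
  qed
  assume n: "1 \<le> n" "n \<le> card (W_inf0 \<eta>)"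
  then have "W_inf0 \<eta> \<noteq> {}" by auto
  then obtain G where G: "finite G" "conn G 0" "W_inf0 \<eta> \<subseteq> G" "int (card G) \<le> 2 * (\<Sum>x\<in>G. int (\<eta> x))"
    using big[OF fin] by blast
  have "card (W_inf0 \<eta>) \<le> card G" using G by (simp add: card_mono)
  with n G show "\<exists>G. finite G \<and> conn G 0 \<and> n \<le> card G \<and> int (card G) \<le> 2 * (\<Sum>x\<in>G. int (\<eta> x))"
    by (intro exI[of _ G]) auto
qed



definition Anim :: "'d::finite site \<Rightarrow> nat \<Rightarrow> 'd site set set" where
  "Anim z m = {G. finite G \<and> conn G z \<and> card G = m}"

fun pos :: "'d::finite site \<Rightarrow> 'd site list \<Rightarrow> 'd site list" where
  "pos z [] = [z]"
| "pos z (d # ds) = z # pos (z + d) ds"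

fun steps :: "'d::finite site list \<Rightarrow> 'd site list" where
  "steps (a # b # xs) = (b - a) # steps (b # xs)"
| "steps _ = []"

lemma pos_steps: "ps \<noteq> [] \<Longrightarrow> pos (hd ps) (steps ps) = ps"
  by (induction ps rule: steps.induct) auto

lemma length_steps: "length (steps ps) = length ps - 1"
  by (induction ps rule: steps.induct) auto

definition Offs :: "'d::finite site set" where
  "Offs = range ev \<union> range (\<lambda>i. - ev i)"

lemma card_Offs: "card (Offs :: 'd::finite site set) \<le> 2 * CARD('d)"
proof -
  have "card (Offs :: 'd site set) \<le> card (range (ev :: 'd \<Rightarrow> _)) + card (range (\<lambda>i::'d. - ev i))"
    unfolding Offs_def by (rule card_Un_le)
  also have "\<dots> \<le> CARD('d) + CARD('d)" by (intro add_mono card_image_le) auto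
  finally show ?thesis by simp
qed

lemma finite_Offs[simp]: "finite (Offs :: 'd::finite site set)" by (simp add: Offs_def)

lemma steps_Offs: "successively adj ps \<Longrightarrow> set (steps ps) \<subseteq> Offs"
proof (induction ps rule: steps.induct)
  case (1 a b xs)
  have "adj a b" using 1(2) by simp
  then obtain i where "b = a + ev i \<or> b = a - ev i" using adj_cases by blast
  then have "b - a \<in> Offs" by (auto simp: Offs_def)
  with 1 show ?case by simp
qed auto

lemma exit_edge:
  assumes "(z,y) \<in> (edg G)\<^sup>*" "z \<in> S" "y \<notin> S"
  shows "\<exists>u v. u \<in> S \<and> v \<notin> S \<and> (u,v) \<in> edg G"
  using assms
proof (induction rule: rtrancl_induct)
  case base then show ?case by simp
next
  case (step y' y)
  show ?case
  proof (cases "y' \<in> S")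
    case True then show ?thesis using step by blast
  next
    case False then show ?thesis using step by blast
  qed
qed

lemma walk_exists:
  assumes fG: "finite G" and cG: "conn G z" and k: "k < card G"
  shows "\<exists>ps. ps \<noteq> [] \<and> hd ps = z \<and> successively adj ps \<and> set ps \<subseteq> G \<and> card (set ps) = Suc k \<and> length ps = Suc (2 * k)"
  using k
proof (induction k)
  case 0
  have "z \<in> G" using cG by (simp add: conn_def)
  then show ?case by (intro exI[of _ "[z]"]) auto
next
  case (Suc k)
  then obtain ps where ps: "ps \<noteq> []" "hd ps = z" "successively adj ps" "set ps \<subseteq> G" "card (set ps) = Suc k"
    "length ps = Suc (2 * k)" by auto
  have "set ps \<noteq> G" using Suc.prems ps(5) by auto
  then obtain y where y: "y \<in> G" "y \<notin> set ps" using ps(4) by blast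
  have zs: "z \<in> set ps" using ps(1,2) by (cases ps) auto
  have "(z,y) \<in> (edg G)\<^sup>*" using cG y by (auto simp: conn_def)
  then obtain u v where uv: "u \<in> set ps" "v \<notin> set ps" "(u,v) \<in> edg G"
    using exit_edge[OF _ zs y(2)] by blast
  from split_list[OF uv(1)] obtain as bs where psd: "ps = as @ u # bs" by blast
  have auv: "adj u v" "v \<in> G" using uv(3) by (auto simp: edg_def)
  define ps' where "ps' = as @ u # v # u # bs"
  have succ: "successively adj ps'"
  proof -
    have s0: "successively adj (as @ u # bs)" using ps(3) psd by simp
    have s1: "successively adj as" "successively adj (u # bs)"
      "as = [] \<or> adj (last as) u"
      using s0[unfolded successively_append_iff] by simp_all
    have vu: "adj v u" using auv(1) adj_sym by blast
    have "successively adj (u # v # u # bs)"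
      using s1(2) auv(1) vu by simp
    then show ?thesis unfolding ps'_def successively_append_iff using s1 by simp
  qed
  have hd': "hd ps' = z" using ps(2) unfolding psd ps'_def by (cases as) auto
  have set': "set ps' = insert v (set ps)" unfolding ps'_def psd by auto
  show ?case
  proof (intro exI[of _ ps'] conjI)
    show "ps' \<noteq> []" by (simp add: ps'_def)
    show "hd ps' = z" by (rule hd')
    show "successively adj ps'" by (rule succ)
    show "set ps' \<subseteq> G" using set' ps(4) auv(2) by auto
    show "card (set ps') = Suc (Suc k)" using set' uv(2) ps(5) by simp
    show "length ps' = Suc (2 * Suc k)" using ps(6) unfolding ps'_def psd by simp
  qed
qed

lemma Anim_sub:
  assumes m: "m \<ge> 1"
  shows "Anim z m \<subseteq> (\<lambda>ds. set (pos z ds)) ` {ds. set ds \<subseteq> Offs \<and> length ds = 2 * (m - 1)}"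
proof
  fix G assume "G \<in> Anim z m"
  then have G: "finite G" "conn G z" "card G = m" by (auto simp: Anim_def)
  obtain ps where ps: "ps \<noteq> []" "hd ps = z" "successively adj ps" "set ps \<subseteq> G"
    "card (set ps) = Suc (m - 1)" "length ps = Suc (2 * (m - 1))"
    using walk_exists[OF G(1,2), of "m - 1"] G(3) m by auto
  have "set ps = G" using ps(4,5) G(1,3) m by (intro card_subset_eq) auto
  moreover have "pos z (steps ps) = ps" using pos_steps[OF ps(1)] ps(2) by simp
  moreover have "set (steps ps) \<subseteq> Offs" by (rule steps_Offs[OF ps(3)])
  moreover have "length (steps ps) = 2 * (m - 1)" using ps(6) by (simp add: length_steps)
  ultimately show "G \<in> (\<lambda>ds. set (pos z ds)) ` {ds. set ds \<subseteq> Offs \<and> length ds = 2 * (m - 1)}"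
    by (intro rev_image_eqI[of "steps ps"]) auto
qed

lemma Anim_finite_card:
  fixes z :: "'d::finite site"
  assumes m: "m \<ge> 1"
  shows "finite (Anim z m)" "card (Anim z m) \<le> (2 * CARD('d)) ^ (2 * m)"
proof -
  let ?L = "{ds. set ds \<subseteq> (Offs :: 'd site set) \<and> length ds = 2 * (m - 1)}"
  have fL: "finite ?L" by (rule finite_lists_length_eq) simp
  show "finite (Anim z m)" by (rule finite_subset[OF Anim_sub[OF m] finite_imageI[OF fL]])
  have "card (Anim z m) \<le> card ((\<lambda>ds. set (pos z ds)) ` ?L)"
    by (rule card_mono[OF finite_imageI[OF fL] Anim_sub[OF m]])
  also have "\<dots> \<le> card ?L" by (rule card_image_le[OF fL])
  also have "\<dots> = card (Offs :: 'd site set) ^ (2 * (m - 1))" by (rule card_lists_length_eq) simp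
  also have "\<dots> \<le> (2 * CARD('d)) ^ (2 * (m - 1))" by (rule power_mono[OF card_Offs]) simp
  also have "\<dots> \<le> (2 * CARD('d)) ^ (2 * m)"
    by (rule power_increasing) (use m in auto)
  finally show "card (Anim z m) \<le> (2 * CARD('d)) ^ (2 * m)" .
qed

lemma Anim_empty0: "Anim z 0 = {}"
  by (auto simp: Anim_def conn_def)



lemma pps: "product_prob_space (\<lambda>_::'i. measure_pmf p)"
  by (simp add: product_prob_space_def product_prob_space_axioms_def product_sigma_finite_def
      prob_space_measure_pmf prob_space_imp_sigma_finite)

lemma space_pm[simp]: "space (prod_measure p :: ('d::finite config) measure) = UNIV"
  by (simp add: prod_measure_def space_PiM)

lemma prob_pm: "prob_space (prod_measure p :: ('d::finite config) measure)"
  unfolding prod_measure_def by (rule prob_space_PiM) (simp add: prob_space_measure_pmf)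

lemma sets_sum_ge[measurable]:
  "{\<eta>::'d::finite config. a \<le> (\<Sum>x\<in>G. real (\<eta> x))} \<in> sets (prod_measure p)"
proof -
  have "(\<lambda>\<eta>::'d config. \<Sum>x\<in>G. real (\<eta> x)) \<in> borel_measurable (prod_measure p)"
    unfolding prod_measure_def by measurable
  then have "{\<eta> \<in> space (prod_measure p). a \<le> (\<Sum>x\<in>G. real (\<eta> x))} \<in> sets (prod_measure p)"
    by measurable
  then show ?thesis by simp
qed

lemma mgf_nonneg: "mgf p s \<ge> 0"
  unfolding mgf_def by (rule integral_nonneg_AE) auto

lemma nn_mgf:
  assumes "integrable (measure_pmf p) (\<lambda>k. exp (t * real k))"
  shows "(\<integral>\<^sup>+ k. ennreal (exp (t * real k)) \<partial>measure_pmf p) = ennreal (mgf p t)"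
  unfolding mgf_def by (rule nn_integral_eq_integral[OF assms]) auto

lemma chernoff:
  fixes G :: "'d::finite site set"
  assumes fG: "finite G" and s: "s > 0"
    and int: "integrable (measure_pmf p) (\<lambda>k. exp (s * real k))"
  shows "measure (prod_measure p) {\<eta>::'d config. a \<le> (\<Sum>x\<in>G. real (\<eta> x))}
     \<le> exp (- s * a) * mgf p s ^ card G"
proof -
  let ?P = "prod_measure p :: 'd config measure"
  let ?M = "\<lambda>_::'d site. measure_pmf p"
  interpret P: product_prob_space ?M "UNIV :: 'd site set" by (rule pps)
  interpret Q: prob_space ?P by (rule prob_pm)
  have "emeasure ?P {\<eta> \<in> space ?P. (\<Sum>x\<in>G. real (\<eta> x)) \<ge> a}
     \<le> ennreal (exp (-s * a)) * (\<integral>\<^sup>+\<eta>. ennreal (exp (s * (\<Sum>x\<in>G. real (\<eta> x)))) * indicator (space ?P) \<eta> \<partial>?P)"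
    by (rule Chernoff_ineq_nn_integral_ge[OF s]) (simp_all add: prod_measure_def)
  also have "(\<integral>\<^sup>+\<eta>. ennreal (exp (s * (\<Sum>x\<in>G. real (\<eta> x)))) * indicator (space ?P) \<eta> \<partial>?P)
      = (\<integral>\<^sup>+\<eta>. (\<lambda>\<omega>. \<Prod>x\<in>G. ennreal (exp (s * real (\<omega> x)))) (restrict \<eta> G) \<partial>?P)"
  proof (rule nn_integral_cong)
    fix \<eta> :: "'d config"
    have "ennreal (exp (s * (\<Sum>x\<in>G. real (\<eta> x)))) = ennreal (\<Prod>x\<in>G. exp (s * real (\<eta> x)))"
      by (simp add: sum_distrib_left exp_sum[OF fG])
    also have "\<dots> = (\<Prod>x\<in>G. ennreal (exp (s * real (\<eta> x))))"
      by (rule prod_ennreal[symmetric]) auto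
    also have "\<dots> = (\<Prod>x\<in>G. ennreal (exp (s * real (restrict \<eta> G x))))"
      by (rule prod.cong) auto
    finally show "ennreal (exp (s * (\<Sum>x\<in>G. real (\<eta> x)))) * indicator (space ?P) \<eta>
       = (\<lambda>\<omega>. \<Prod>x\<in>G. ennreal (exp (s * real (\<omega> x)))) (restrict \<eta> G)" by simp
  qed
  also have "\<dots> = (\<integral>\<^sup>+\<omega>. (\<Prod>x\<in>G. ennreal (exp (s * real (\<omega> x)))) \<partial>distr ?P (PiM G ?M) (\<lambda>\<eta>. restrict \<eta> G))"
  proof -
    have mr: "(\<lambda>\<eta>. restrict \<eta> G) \<in> measurable ?P (PiM G ?M)"
      unfolding prod_measure_def by (rule measurable_restrict_subset) simp
    show ?thesis by (rule nn_integral_distr[OF mr, symmetric]) simp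
  qed
  also have "distr ?P (PiM G ?M) (\<lambda>\<eta>. restrict \<eta> G) = PiM G ?M"
    unfolding prod_measure_def by (rule P.distr_PiM_restrict_finite[OF fG]) simp
  also have "(\<integral>\<^sup>+\<omega>. (\<Prod>x\<in>G. ennreal (exp (s * real (\<omega> x)))) \<partial>PiM G ?M)
      = (\<Prod>x\<in>G. \<integral>\<^sup>+k. ennreal (exp (s * real k)) \<partial>measure_pmf p)"
    by (rule P.product_nn_integral_prod[OF fG]) simp
  also have "\<dots> = (\<Prod>x\<in>G. ennreal (mgf p s))" by (simp add: nn_mgf[OF int])
  also have "\<dots> = ennreal (mgf p s ^ card G)"
  proof -
    have "mgf p s \<ge> 0" unfolding mgf_def by (rule integral_nonneg_AE) auto
    then show ?thesis by (simp add: prod_ennreal ennreal_power)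
  qed
  finally have "emeasure ?P {\<eta>. a \<le> (\<Sum>x\<in>G. real (\<eta> x))} \<le> ennreal (exp (-s * a)) * ennreal (mgf p s ^ card G)"
    by simp
  also have "\<dots> = ennreal (exp (-s * a) * mgf p s ^ card G)"
    by (rule ennreal_mult''[symmetric]) (simp add: mgf_nonneg)
  finally show ?thesis
    by (simp add: Q.emeasure_eq_measure ennreal_le_iff mgf_nonneg)
qed



definition Ev :: "'d::finite site \<Rightarrow> nat \<Rightarrow> 'd config set" where
  "Ev z m = (\<Union>G\<in>Anim z m. {\<eta>. real m / 2 \<le> (\<Sum>x\<in>G. real (\<eta> x))})"

lemma Ev_sets: "Ev z m \<in> sets (prod_measure p)"
proof (cases "m \<ge> 1")
  case True
  have "finite (Anim z m)" using Anim_finite_card(1)[OF True] .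
  then show ?thesis unfolding Ev_def by (rule sets.finite_UN) (rule sets_sum_ge)
next
  case False then have "m = 0" by simp
  then show ?thesis by (simp add: Ev_def Anim_empty0)
qed

lemma Ev_measure:
  fixes z :: "'d::finite site"
  assumes s: "s > 0" and int: "integrable (measure_pmf p) (\<lambda>k. exp (s * real k))"
  shows "measure (prod_measure p) (Ev z m) \<le> (real ((2 * CARD('d))^2) * exp (- s / 2) * mgf p s) ^ m"
proof (cases "m \<ge> 1")
  case False then have "m = 0" by simp
  then show ?thesis by (simp add: Ev_def Anim_empty0)
next
  case True
  let ?P = "prod_measure p :: 'd config measure"
  have fA: "finite (Anim z m)" using Anim_finite_card(1)[OF True] .
  have "measure ?P (Ev z m) \<le> (\<Sum>G\<in>Anim z m. measure ?P {\<eta>. real m / 2 \<le> (\<Sum>x\<in>G. real (\<eta> x))})"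
    unfolding Ev_def by (rule measure_UNION_le[OF fA]) (rule sets_sum_ge)
  also have "\<dots> \<le> (\<Sum>G\<in>Anim z m. exp (- s * (real m / 2)) * mgf p s ^ m)"
  proof (rule sum_mono)
    fix G assume "G \<in> Anim z m"
    then have G: "finite G" "card G = m" by (auto simp: Anim_def)
    show "measure ?P {\<eta>. real m / 2 \<le> (\<Sum>x\<in>G. real (\<eta> x))} \<le> exp (- s * (real m / 2)) * mgf p s ^ m"
      using chernoff[OF G(1) s int, of "real m / 2"] G(2) by simp
  qed
  also have "\<dots> = real (card (Anim z m)) * (exp (- s * (real m / 2)) * mgf p s ^ m)" by simp
  also have "\<dots> \<le> real ((2 * CARD('d)) ^ (2 * m)) * (exp (- s * (real m / 2)) * mgf p s ^ m)"
  proof (rule mult_right_mono)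
    show "real (card (Anim z m)) \<le> real ((2 * CARD('d)) ^ (2 * m))"
      using Anim_finite_card(2)[OF True, of z] by (simp only: of_nat_le_iff)
  qed (simp add: mgf_nonneg)
  also have "\<dots> = (real ((2 * CARD('d))^2) * exp (- s / 2) * mgf p s) ^ m"
  proof -
    have "exp (- s * (real m / 2)) = exp (- s / 2) ^ m" by (simp add: exp_of_nat_mult[symmetric] algebra_simps)
    moreover have "real ((2 * CARD('d)) ^ (2 * m)) = real ((2 * CARD('d))^2) ^ m" by (simp add: power_mult)
    ultimately show ?thesis by (simp add: power_mult_distrib)
  qed
  finally show ?thesis .
qed



lemma tail_bound:
  fixes P :: "'a measure" and A :: "nat \<Rightarrow> 'a set"
  assumes fm: "finite_measure P" and As: "\<And>m. A m \<in> sets P"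
    and q: "0 \<le> q" "q \<le> 1/4" and Am: "\<And>m. measure P (A m) \<le> q ^ m"
  shows "measure P (\<Union>k. A (n + k)) \<le> 2 * q ^ n"
proof -
  interpret finite_measure P by (rule fm)
  have sg: "summable (\<lambda>k. q ^ n * q ^ k)" using q by (intro summable_mult summable_geometric) auto
  have le: "norm (measure P (A (n + k))) \<le> q ^ n * q ^ k" for k
    using Am[of "n+k"] by (simp add: power_add)
  have sm: "summable (\<lambda>k. measure P (A (n + k)))"
    by (rule summable_comparison_test'[OF sg]) (use le in auto)
  have "measure P (\<Union>k. A (n + k)) \<le> (\<Sum>k. measure P (A (n + k)))"
    by (rule finite_measure_subadditive_countably) (use As sm in auto)
  also have "\<dots> \<le> (\<Sum>k. q ^ n * q ^ k)"
    by (rule suminf_le[OF _ sm sg]) (use le in auto)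
  also have "\<dots> = q ^ n * (1 / (1 - q))"
    using q by (simp add: suminf_mult[OF summable_geometric] suminf_geometric)
  also have "\<dots> \<le> q ^ n * 2"
    by (rule mult_left_mono) (use q in \<open>auto simp: field_simps\<close>)
  finally show ?thesis by simp
qed

lemma prob_main:
  fixes p :: "nat pmf" and s :: real
  assumes s: "s > 0" and int: "integrable (measure_pmf p) (\<lambda>k. exp (s * real k))"
    and qle: "real ((2 * CARD('d::finite))^2) * exp (- s / 2) * mgf p s \<le> 1/4"
  shows "\<exists>A \<in> sets (prod_measure p :: ('d config) measure).
     {\<eta>. \<not> stabilizable \<eta> \<or> infinite (W_inf0 \<eta>) \<or> n \<le> card (W_inf0 \<eta>)} \<subseteq> A \<and>
     measure (prod_measure p) A \<le> exp (- ln 2 * real n)"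
proof -
  let ?P = "prod_measure p :: 'd config measure"
  interpret Q: prob_space ?P by (rule prob_pm)
  define q where "q = real ((2 * CARD('d))^2) * exp (- s / 2) * mgf p s"
  have q0: "0 \<le> q" "q \<le> 1/4" using qle by (auto simp: q_def mgf_nonneg)
  have Evm: "measure ?P (Ev z m) \<le> q ^ m" for z :: "'d site" and m
    unfolding q_def by (rule Ev_measure[OF s int])
  have fm: "finite_measure ?P" by (rule Q.finite_measure_axioms)
  define Nz where "Nz z = (\<Inter>M. \<Union>k. Ev z (Suc M + k))" for z :: "'d site"
  have Nz_sets: "Nz z \<in> sets ?P" for z
    unfolding Nz_def by (intro sets.countable_INT sets.countable_UN) (auto intro: Ev_sets)
  have Nz_le: "measure ?P (Nz z) \<le> 2 * q ^ Suc M" for z M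
  proof -
    have "measure ?P (Nz z) \<le> measure ?P (\<Union>k. Ev z (Suc M + k))"
      by (rule Q.finite_measure_mono) (auto simp: Nz_def intro!: sets.countable_UN Ev_sets)
    also have "\<dots> \<le> 2 * q ^ Suc M"
      by (rule tail_bound[OF fm Ev_sets q0 Evm])
    finally show ?thesis .
  qed
  have Nz0: "measure ?P (Nz z) = 0" for z
  proof (rule ccontr)
    assume "measure ?P (Nz z) \<noteq> 0"
    then have pos: "measure ?P (Nz z) / 2 > 0" by (simp add: order_less_le)
    obtain M where M: "(1/4::real) ^ M < measure ?P (Nz z) / 2"
      using real_arch_pow_inv[OF pos, of "1/4"] by auto
    have "q ^ Suc M \<le> (1/4) ^ Suc M" using q0 by (intro power_mono) auto
    also have "\<dots> \<le> (1/4) ^ M" by (simp add: power_decreasing)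
    finally have "2 * q ^ Suc M < measure ?P (Nz z)" using M by linarith
    with Nz_le[of z M] show False by linarith
  qed
  define N where "N = (\<Union>z. Nz z)"
  have N_null: "N \<in> null_sets ?P"
    unfolding N_def
  proof (rule null_sets_UN')
    show "countable (UNIV :: 'd site set)" by simp
    fix z show "Nz z \<in> null_sets ?P" using Nz_sets Nz0 by (simp add: null_sets_def Q.emeasure_eq_measure)
  qed
  have N_sets: "N \<in> sets ?P" using N_null by (simp add: null_sets_def)
  have N0: "measure ?P N = 0" using N_null by (simp add: null_sets_def Q.emeasure_eq_measure)
  have notgood: "\<eta> \<in> N" if ng: "\<not> good \<eta>" for \<eta>
  proof -
    obtain z where z: "\<And>M. \<not> good_at \<eta> z M" using ng by (auto simp: good_def)
    have "\<eta> \<in> (\<Union>k. Ev z (Suc M + k))" for M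
    proof -
      obtain G where G: "finite G" "conn G z" "Suc M \<le> card G" "\<not> 2 * (\<Sum>x\<in>G. int (\<eta> x)) < int (card G)"
        using z[of "Suc M"] by (auto simp: good_at_def)
      have "G \<in> Anim z (card G)" using G by (simp add: Anim_def)
      moreover have "real (card G) / 2 \<le> (\<Sum>x\<in>G. real (\<eta> x))"
      proof -
        have "int (card G) \<le> 2 * (\<Sum>x\<in>G. int (\<eta> x))" using G(4) by linarith
        then have "real (card G) \<le> 2 * (\<Sum>x\<in>G. real (\<eta> x))"
          by (metis (mono_tags, lifting) of_int_le_iff of_int_of_nat_eq of_int_mult of_int_numeral of_int_sum sum.cong)
        then show ?thesis by simp
      qed
      ultimately have "\<eta> \<in> Ev z (card G)" by (auto simp: Ev_def)
      moreover have "card G = Suc M + (card G - Suc M)" using G(3) by simp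
      ultimately show ?thesis by (metis UN_iff UNIV_I)
    qed
    then show ?thesis by (auto simp: N_def Nz_def)
  qed
  show ?thesis
  proof (cases "n = 0")
    case True
    have U: "UNIV \<in> sets ?P" using sets.top[of ?P] by simp
    have "measure ?P UNIV = 1" using Q.prob_space by simp
    then show ?thesis using True U by (intro bexI[of _ UNIV]) auto
  next
    case False
    define A where "A = N \<union> (\<Union>k. Ev 0 (n + k))"
    have A_sets: "A \<in> sets ?P" unfolding A_def using N_sets by (auto intro!: sets.countable_UN Ev_sets)
    have sub: "{\<eta>::'d config. \<not> stabilizable \<eta> \<or> infinite (W_inf0 \<eta>) \<or> n \<le> card (W_inf0 \<eta>)} \<subseteq> A"
    proof
      fix \<eta> :: "'d config" assume h: "\<eta> \<in> {\<eta>. \<not> stabilizable \<eta> \<or> infinite (W_inf0 \<eta>) \<or> n \<le> card (W_inf0 \<eta>)}"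
      show "\<eta> \<in> A"
      proof (cases "good \<eta>")
        case False then show ?thesis using notgood by (auto simp: A_def)
      next
        case True
        note d = det[OF True]
        have "n \<le> card (W_inf0 \<eta>)" using h d(1,2) by auto
        then obtain G where G: "finite G" "conn G 0" "n \<le> card G" "int (card G) \<le> 2 * (\<Sum>x\<in>G. int (\<eta> x))"
          using d(3)[of n] False by auto
        have "G \<in> Anim 0 (card G)" using G by (simp add: Anim_def)
        moreover have "real (card G) / 2 \<le> (\<Sum>x\<in>G. real (\<eta> x))"
        proof -
          have "real (card G) \<le> 2 * (\<Sum>x\<in>G. real (\<eta> x))" using G(4)
            by (metis (mono_tags, lifting) of_int_le_iff of_int_of_nat_eq of_int_mult of_int_numeral of_int_sum sum.cong)
          then show ?thesis by simp
        qed
        ultimately have "\<eta> \<in> Ev 0 (card G)" by (auto simp: Ev_def)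
        moreover have "card G = n + (card G - n)" using G(3) by simp
        ultimately show ?thesis unfolding A_def by (metis UN_iff UNIV_I UnI2)
      qed
    qed
    have "measure ?P A \<le> measure ?P N + measure ?P (\<Union>k. Ev 0 (n + k))"
      unfolding A_def by (rule measure_Un_le[OF N_sets]) (auto intro!: sets.countable_UN Ev_sets)
    also have "\<dots> \<le> 0 + 2 * q ^ n" using N0 tail_bound[OF fm Ev_sets q0 Evm, where n=n] by simp
    also have "\<dots> \<le> 2 * (1/4) ^ n" using q0 by (simp add: power_mono)
    also have "\<dots> \<le> (1/2) ^ n"
    proof -
      have e: "(1/4::real) ^ n = (1/2) ^ n * (1/2) ^ n" by (simp add: power_mult_distrib[symmetric])
      obtain m where nm: "n = Suc m" using False by (cases n) auto
      have h: "(1/2::real) ^ n \<le> 1/2"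
      proof -
        have "(1/2::real) ^ m \<le> 1" by (simp add: power_le_one)
        then show ?thesis unfolding nm by simp
      qed
      have "2 * ((1/2::real) ^ n * (1/2) ^ n) \<le> 2 * ((1/2) * (1/2) ^ n)"
        using h by (intro mult_left_mono mult_right_mono) auto
      then show ?thesis unfolding e by simp
    qed
    also have "\<dots> = exp (- ln 2 * real n)"
    proof -
      have e2: "exp (real n * ln 2) = 2 ^ n" by (subst exp_of_nat_mult) simp
      have "exp (- ln 2 * real n) = inverse (exp (real n * ln 2))" by (simp add: exp_minus mult.commute)
      with e2 show ?thesis by (simp add: power_one_over inverse_eq_divide)
    qed
    finally show ?thesis using A_sets sub by blast
  qed
qed



lemma mgf_mono:
  assumes "integrable (measure_pmf p) (\<lambda>k. exp (s * real k))" "integrable (measure_pmf p) (\<lambda>k. exp (t * real k))"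
    and "s \<le> t"
  shows "mgf p s \<le> mgf p t"
  unfolding mgf_def using assms by (intro integral_mono) (auto intro: mult_right_mono)

lemma amgm: fixes y e :: real assumes "e > 0" shows "y \<le> e * y^2 + 1 / (4 * e)"
proof -
  have "0 \<le> (2*e*y - 1)^2" by simp
  then have "0 \<le> 4*e^2*y^2 - 4*e*y + 1" by (simp add: power2_eq_square algebra_simps)
  then have "4*e*y \<le> 4*e*(e*y^2 + 1/(4*e))" using assms by (simp add: algebra_simps power2_eq_square)
  then show ?thesis using assms by simp
qed

lemma pw:
  fixes e s :: real assumes e: "e > 0"
  shows "exp (s * real k) \<le> 1 + e * exp ((2 * s) * real k) + real k / (4 * e)"
proof (cases "k = 0")
  case True then show ?thesis using e by simp
next
  case False
  have y: "exp ((2 * s) * real k) = (exp (s * real k))^2"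
    by (simp add: power2_eq_square exp_add[symmetric])
  have "exp (s * real k) \<le> e * (exp (s * real k))^2 + 1 / (4 * e)" by (rule amgm[OF e])
  moreover have "1 / (4 * e) \<le> real k / (4 * e)" using False e by (simp add: divide_right_mono)
  ultimately show ?thesis using y by simp
qed

lemma mgf_split:
  fixes e s :: real
  assumes e: "e > 0" and i1: "integrable (measure_pmf p) (\<lambda>k. exp (s * real k))"
    and i2: "integrable (measure_pmf p) (\<lambda>k. exp ((2 * s) * real k))"
    and i3: "integrable (measure_pmf p) (\<lambda>k. real k)"
  shows "mgf p s \<le> 1 + e * mgf p (2 * s) + measure_pmf.expectation p real / (4 * e)"
proof -
  have "mgf p s \<le> measure_pmf.expectation p (\<lambda>k. 1 + e * exp ((2 * s) * real k) + real k / (4 * e))"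
    unfolding mgf_def using i1 i2 i3 pw[OF e] by (intro integral_mono) auto
  also have "\<dots> = 1 + e * mgf p (2 * s) + measure_pmf.expectation p real / (4 * e)"
    unfolding mgf_def using i2 i3
    by (simp add: Bochner_Integration.integral_add Bochner_Integration.integral_mult_right
        Bochner_Integration.integral_divide measure_pmf.prob_space)
  finally show ?thesis .
qed

lemma inv_sqrt_at_top: "filterlim (\<lambda>\<rho>::real. 1 / sqrt \<rho>) at_top (at_right 0)"
  unfolding filterlim_at_top_ge[where c=1]
proof (intro allI impI)
  fix Z :: real assume Z: "Z \<ge> 1"
  show "eventually (\<lambda>\<rho>. Z \<le> 1 / sqrt \<rho>) (at_right 0)"
    unfolding eventually_at_right_field
  proof (intro exI[of _ "1 / Z^2"] conjI allI impI)
    show "(0::real) < 1 / Z^2" using Z by simp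
    fix y :: real assume y: "0 < y" "y < 1 / Z^2"
    have "sqrt y < sqrt (1 / Z^2)" using y by (simp add: real_sqrt_less_iff)
    also have "\<dots> = 1 / Z" using Z by (simp add: real_sqrt_divide)
    finally have "sqrt y < 1 / Z" .
    then have "Z * sqrt y < 1" using Z by (simp add: field_simps)
    then show "Z \<le> 1 / sqrt y" using y by (simp add: field_simps)
  qed
qed



theorem theorem4p5:
  fixes \<mu> :: "real \<Rightarrow> nat pmf"
  assumes mgf_finite: "\<And>\<rho> t. 0 < \<rho> \<Longrightarrow> \<rho> < 1 \<Longrightarrow> integrable (measure_pmf (\<mu> \<rho>)) (\<lambda>k. exp (t * real k))"
    and mean: "\<And>\<rho>. 0 < \<rho> \<Longrightarrow> \<rho> < 1 \<Longrightarrow> measure_pmf.expectation (\<mu> \<rho>) real = \<rho>"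
    and growth: "\<And>a :: real \<Rightarrow> real.
        (\<forall>\<rho>. 0 < \<rho> \<and> \<rho> < 1 \<longrightarrow> a \<rho> \<ge> 0) \<Longrightarrow> filterlim a at_top (at_right 0) \<Longrightarrow>
        filterlim (\<lambda>\<rho>. Sup {x. mgf (\<mu> \<rho>) x \<le> a \<rho>}) at_top (at_right 0)"
  shows "eventually (\<lambda>\<rho>. \<exists>\<gamma>>0. \<forall>n::nat.
           \<exists>A \<in> sets (prod_measure (\<mu> \<rho>) :: ('d::finite config) measure).
             {\<eta>. \<not> stabilizable \<eta> \<or> infinite (W_inf0 \<eta>) \<or> n \<le> card (W_inf0 \<eta>)} \<subseteq> A \<and>
             measure (prod_measure (\<mu> \<rho>)) A \<le> exp (- \<gamma> * real n)) (at_right 0)"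
proof -
  define d' where "d' = real ((2 * CARD('d))^2)"
  have d'pos: "d' \<ge> 1" unfolding d'_def
  proof -
    have "(1::nat) \<le> (2 * CARD('d))^2" using one_le_power[of "2 * CARD('d)" 2] by simp
    then show "1 \<le> real ((2 * CARD('d))^2)" by linarith
  qed
  define s0 where "s0 = 2 * ln (8 * d')"
  have s0pos: "s0 > 0" using d'pos by (simp add: s0_def)
  have es0: "exp (- s0 / 2) = 1 / (8 * d')"
    using d'pos by (simp add: s0_def exp_minus exp_ln inverse_eq_divide)
  define a where "a \<rho> = 1 / sqrt \<rho>" for \<rho> :: real
  have a_nn: "\<forall>\<rho>. 0 < \<rho> \<and> \<rho> < 1 \<longrightarrow> a \<rho> \<ge> 0" by (simp add: a_def)
  have F: "filterlim (\<lambda>\<rho>. Sup {x. mgf (\<mu> \<rho>) x \<le> a \<rho>}) at_top (at_right 0)"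
    by (rule growth[OF a_nn]) (simp add: a_def inv_sqrt_at_top)
  have ev1: "eventually (\<lambda>\<rho>. 2 * s0 + 1 \<le> Sup {x. mgf (\<mu> \<rho>) x \<le> a \<rho>}) (at_right 0)"
    using F by (simp add: filterlim_at_top)
  have ev2: "eventually (\<lambda>\<rho>::real. 0 < \<rho>) (at_right 0)" by (rule eventually_at_right_less)
  have ev3: "eventually (\<lambda>\<rho>::real. \<rho> < 1/4) (at_right 0)"
    unfolding eventually_at_right_field by (intro exI[of _ "1/4"]) auto
  show ?thesis
  proof (rule eventually_mono[OF eventually_conj[OF ev1 eventually_conj[OF ev2 ev3]]])
    fix \<rho> :: real
    assume h: "2 * s0 + 1 \<le> Sup {x. mgf (\<mu> \<rho>) x \<le> a \<rho>} \<and> 0 < \<rho> \<and> \<rho> < 1/4"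
    let ?p = "\<mu> \<rho>"
    let ?S = "{x. mgf ?p x \<le> a \<rho>}"
    have r: "0 < \<rho>" "\<rho> < 1" "\<rho> < 1/4" using h by auto
    have ints: "integrable (measure_pmf ?p) (\<lambda>k. exp (t * real k))" for t
      using mgf_finite[OF r(1,2)] .
    have sq: "0 < sqrt \<rho>" "sqrt \<rho> \<le> 1/2"
    proof -
      show "0 < sqrt \<rho>" using r by simp
      have "sqrt \<rho> \<le> sqrt (1/4)" using r by (simp add: real_sqrt_le_iff)
      also have "sqrt (1/4::real) = 1/2" by (simp add: real_sqrt_divide)
      finally show "sqrt \<rho> \<le> 1/2" .
    qed
    have mgf0: "mgf ?p 0 = 1" by (simp add: mgf_def measure_pmf.prob_space)
    have a1: "a \<rho> \<ge> 1" using sq r by (simp add: a_def)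
    have S0: "0 \<in> ?S" using mgf0 a1 by simp
    have "\<exists>x\<in>?S. 2 * s0 < x"
    proof (cases "bdd_above ?S")
      case True
      have "2 * s0 < Sup ?S" using h by linarith
      then show ?thesis using less_cSup_iff[OF _ True] S0 by blast
    next
      case False
      then show ?thesis unfolding bdd_above_def by (meson linorder_not_le)
    qed
    then obtain x where x: "mgf ?p x \<le> a \<rho>" "2 * s0 < x" by blast
    have m2: "mgf ?p (2 * s0) \<le> a \<rho>"
      using mgf_mono[OF ints ints, of "2 * s0" x] x by simp
    have ir: "integrable (measure_pmf ?p) (\<lambda>k. real k)"
    proof (rule ccontr)
      assume "\<not> integrable (measure_pmf ?p) (\<lambda>k. real k)"
      then have "measure_pmf.expectation ?p real = 0" by (simp add: not_integrable_integral_eq)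
      with mean[OF r(1,2)] r show False by simp
    qed
    have e: "sqrt \<rho> / 4 > 0" using sq by simp
    have "mgf ?p s0 \<le> 1 + sqrt \<rho> / 4 * mgf ?p (2 * s0) + measure_pmf.expectation ?p real / (4 * (sqrt \<rho> / 4))"
      by (rule mgf_split[OF e ints ints ir])
    also have "measure_pmf.expectation ?p real / (4 * (sqrt \<rho> / 4)) = sqrt \<rho>"
      using mean[OF r(1,2)] sq r by (simp add: field_simps real_sqrt_mult[symmetric])
    also have "sqrt \<rho> / 4 * mgf ?p (2 * s0) \<le> sqrt \<rho> / 4 * a \<rho>"
      using m2 sq by (intro mult_left_mono) auto
    also have "sqrt \<rho> / 4 * a \<rho> = 1/4" using sq by (simp add: a_def)
    finally have mgfs0: "mgf ?p s0 \<le> 2" using sq by linarith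
    have q: "real ((2 * CARD('d))^2) * exp (- s0 / 2) * mgf ?p s0 \<le> 1/4"
    proof -
      have "d' * exp (- s0 / 2) = 1/8" using d'pos unfolding es0 by simp
      then have "real ((2 * CARD('d))^2) * exp (- s0 / 2) * mgf ?p s0 = 1/8 * mgf ?p s0"
        unfolding d'_def by simp
      then show ?thesis using mgfs0 by linarith
    qed
    have "\<forall>n::nat. \<exists>A \<in> sets (prod_measure ?p :: ('d config) measure).
             {\<eta>. \<not> stabilizable \<eta> \<or> infinite (W_inf0 \<eta>) \<or> n \<le> card (W_inf0 \<eta>)} \<subseteq> A \<and>
             measure (prod_measure ?p) A \<le> exp (- ln 2 * real n)"
      using prob_main[OF s0pos ints q] by blast
    moreover have "(ln 2 :: real) > 0" by simp
    ultimately show "\<exists>\<gamma>>0. \<forall>n::nat.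
           \<exists>A \<in> sets (prod_measure ?p :: ('d config) measure).
             {\<eta>. \<not> stabilizable \<eta> \<or> infinite (W_inf0 \<eta>) \<or> n \<le> card (W_inf0 \<eta>)} \<subseteq> A \<and>
             measure (prod_measure ?p) A \<le> exp (- \<gamma> * real n)" by blast
  qed
qed

end
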